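(* Let $P$ be a finite poset, $\epsilon\in\{1,-1\}$, $\xi\in S^{(\epsilon)}$ and $d=\xi(-\infty)$. The following are equivalent. (1) $T^\xi$ is a generator of $\omega^{(\epsilon)}$. (2) There are elements $z_0>w_1<z_1>w_2<\cdots<z_{s-1}>w_s$ of $P$ ($s\ge0$) and $C_0,\ldots,C_s\in C_\xi^{[d-\epsilon]}$ such that (a) $s=0$, or $z_0\in C_0$, $w_s\in C_s$ and $w_i,z_i\in C_i$ for $1\le i\le s-1$; and (b) $\xi(z)=\epsilon$ for every $z\in C_i\cap(w_i,z_i)$ and every $0\le i\le s$, where $w_0=-\infty$, $z_s=\infty$. (3) There is a $q^{(\epsilon)}$-reduced sequence $y_0,x_1,\ldots,y_{t-1},x_t$ satisfying condition N' and $C_0,\ldots,C_t\in C_\xi^{[d-\epsilon]}$ such that (a) $t=0$, or $y_0\in C_0$, $x_t\in C_t$ and $x_i,y_i\in C_i$ for $1\le i\le t-1$; and (b) $\xi(z)=\epsilon$ for every $z\in C_i\cap(x_i,y_i)$ and every $0\le i\le t$, where $x_0=-\infty$, $y_t=\infty$.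
   Context: $P^\pm=P\cup\{-\infty,\infty\}$, $-\infty<z<\infty$ for $z\in P$; intervals $(a,b)$ are open intervals in $P^\pm$. $P^-=P\cup\{-\infty\}$; $\xi^+(B)=\sum_{b\in B}\xi(b)$. Saturated chain from $x$ to $y$: $x=z_0\lessdot\cdots\lessdot z_t=y$ (covering relations), length $t$. $q^{(\epsilon)}\mathrm{dist}(x,y)=\max\{\epsilon t:$ saturated chain of length $t$ from $x$ to $y$ in $P^\pm\}$. For $w_0<z_0>w_1<z_1>\cdots<z_{s-1}>w_s<z_s$ in $P^\pm$, $q^{(\epsilon)}(w_0,z_0,\ldots,w_s,z_s)=\sum_{\ell=0}^s q^{(\epsilon)}\mathrm{dist}(w_\ell,z_\ell)-\sum_{\ell=0}^{s-1}q^{(\epsilon)}\mathrm{dist}(w_{\ell+1},z_\ell)$. Condition N': $y_0>x_1<y_1>\cdots<y_{t-1}>x_t$ in $P$ and $y_i\not>x_j$ whenever $i\le j-2$ (empty sequence allowed). Such a sequence is $q^{(\epsilon)}$-reduced if, with $x_0=-\infty$, $y_t=\infty$, $q^{(\epsilon)}\mathrm{dist}(x_i,y_j)<q^{(\epsilon)}(x_i,y_i,\ldots,x_j,y_j)$ for all $0\le i<j\le t$ with $x_i<y_j$. $S^{(m)}=\{\xi\in\mathbb Z^{P^-}:\xi(x)\ge m\ \forall x\in P,\ \xi(-\infty)\ge\xi^+(C)+m$ for every maximal chain $C$ of $P\}$; $C_\xi^{[m]}$ = set of maximal chains $C$ of $P$ with $\xi^+(C)=m$. $R=\mathbb K[\mathcal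 C(P)]=\bigoplus_{\xi\in S^{(0)}}\mathbb KT^\xi$ (Ehrhart ring of the chain polytope, $T^\xi=\prod_{x\in P^-}T_x^{\xi(x)}$, $\deg T^\xi=\xi(-\infty)$), $\omega^{(1)}=\omega=\bigoplus_{S^{(1)}}\mathbb KT^\xi$ the canonical ideal, $\omega^{(-1)}=R:\omega=\bigoplus_{S^{(-1)}}\mathbb KT^\xi$. A monomial $T^\xi\in\omega^{(\epsilon)}$ is a generator if it lies in the minimal monomial generating set of the $R$-module $\omega^{(\epsilon)}$, i.e. is not $T^{\xi_1}T^{\xi_2}$ with $\xi_1\in S^{(0)}$, $\xi_1(-\infty)>0$, $\xi_2\in S^{(\epsilon)}$. *)

theory Defs
  imports Main
begin

text \<open>The poset P is a finite subset of a type of class order (with the induced order).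
  P^\<pm> is modelled by the datatype below: NInf = -\<infinity>, PInf = +\<infinity>.\<close>

datatype 'a ext = NInf | Elem 'a | PInf

fun lessE :: "('a::order) ext \<Rightarrow> 'a ext \<Rightarrow> bool" where
  "lessE NInf (Elem _) = True"
| "lessE NInf PInf = True"
| "lessE (Elem a) (Elem b) = (a < b)"
| "lessE (Elem _) PInf = True"
| "lessE _ _ = False"

definition PE :: "'a set \<Rightarrow> 'a ext set" where
  "PE P = {NInf, PInf} \<union> Elem ` P"

definition PM :: "'a set \<Rightarrow> 'a ext set" where
  "PM P = insert NInf (Elem ` P)"

definition covers :: "('a::order) set \<Rightarrow> 'a ext \<Rightarrow> 'a ext \<Rightarrow> bool" where
  "covers P a b \<longleftrightarrow> a \<in> PE P \<and> b \<in> PE P \<and> lessE a b \<and>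
     \<not> (\<exists>c\<in>PE P. lessE a c \<and> lessE c b)"

definition satchain :: "('a::order) set \<Rightarrow> 'a ext \<Rightarrow> 'a ext \<Rightarrow> nat \<Rightarrow> bool" where
  "satchain P a b t \<longleftrightarrow> (\<exists>zs. length zs = Suc t \<and> zs ! 0 = a \<and> zs ! t = b \<and>
     (\<forall>i<t. covers P (zs ! i) (zs ! Suc i)))"

definition qdist :: "('a::order) set \<Rightarrow> int \<Rightarrow> 'a ext \<Rightarrow> 'a ext \<Rightarrow> int" where
  "qdist P eps a b = Max {eps * int t | t. satchain P a b t}"

definition qseq :: "('a::order) set \<Rightarrow> int \<Rightarrow> (nat \<Rightarrow> 'a ext) \<Rightarrow> (nat \<Rightarrow> 'a ext) \<Rightarrow> nat \<Rightarrow> nat \<Rightarrow> int" where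
  "qseq P eps W Z i j = (\<Sum>l = i..j. qdist P eps (W l) (Z l))
      - (\<Sum>l = i..<j. qdist P eps (W (Suc l)) (Z l))"

definition lowE :: "(nat \<Rightarrow> 'a) \<Rightarrow> nat \<Rightarrow> 'a ext" where
  "lowE x i = (if i = 0 then NInf else Elem (x i))"

definition highE :: "(nat \<Rightarrow> 'a) \<Rightarrow> nat \<Rightarrow> nat \<Rightarrow> 'a ext" where
  "highE y t i = (if i = t then PInf else Elem (y i))"

definition condN' :: "('a::order) set \<Rightarrow> nat \<Rightarrow> (nat \<Rightarrow> 'a) \<Rightarrow> (nat \<Rightarrow> 'a) \<Rightarrow> bool" where
  "condN' P t y x \<longleftrightarrow>
     (\<forall>i<t. y i \<in> P \<and> x (Suc i) \<in> P \<and> x (Suc i) < y i) \<and>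
     (\<forall>i. 1 \<le> i \<and> i < t \<longrightarrow> x i < y i) \<and>
     (\<forall>i j. i < t \<and> 1 \<le> j \<and> j \<le> t \<and> i + 2 \<le> j \<longrightarrow> \<not> (x j < y i))"

definition qreduced :: "('a::order) set \<Rightarrow> int \<Rightarrow> nat \<Rightarrow> (nat \<Rightarrow> 'a) \<Rightarrow> (nat \<Rightarrow> 'a) \<Rightarrow> bool" where
  "qreduced P eps t y x \<longleftrightarrow>
     (\<forall>i j. i < j \<and> j \<le> t \<and> lessE (lowE x i) (highE y t j) \<longrightarrow>
        qdist P eps (lowE x i) (highE y t j) < qseq P eps (lowE x) (highE y t) i j)"

definition is_chain :: "('a::order) set \<Rightarrow> 'a set \<Rightarrow> bool" where
  "is_chain P C \<longleftrightarrow> C \<subseteq> P \<and> (\<forall>a\<in>C. \<forall>b\<in>C. a \<le> b \<or> b \<le> a)"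

definition max_chain :: "('a::order) set \<Rightarrow> 'a set \<Rightarrow> bool" where
  "max_chain P C \<longleftrightarrow> is_chain P C \<and> (\<forall>D. is_chain P D \<and> C \<subseteq> D \<longrightarrow> D = C)"

definition xiplus :: "('a ext \<Rightarrow> int) \<Rightarrow> 'a set \<Rightarrow> int" where
  "xiplus xi C = (\<Sum>b\<in>C. xi (Elem b))"

text \<open>S^(m); \<xi> is a function on P^- (values outside P^- are irrelevant).\<close>
definition Sm :: "('a::order) set \<Rightarrow> int \<Rightarrow> ('a ext \<Rightarrow> int) \<Rightarrow> bool" where
  "Sm P m xi \<longleftrightarrow> (\<forall>x\<in>P. xi (Elem x) \<ge> m) \<and>
     (\<forall>C. max_chain P C \<longrightarrow> xi NInf \<ge> xiplus xi C + m)"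

definition Cxi :: "('a::order) set \<Rightarrow> ('a ext \<Rightarrow> int) \<Rightarrow> int \<Rightarrow> 'a set set" where
  "Cxi P xi m = {C. max_chain P C \<and> xiplus xi C = m}"

definition is_generator :: "('a::order) set \<Rightarrow> int \<Rightarrow> ('a ext \<Rightarrow> int) \<Rightarrow> bool" where
  "is_generator P eps xi \<longleftrightarrow> Sm P eps xi \<and>
     \<not> (\<exists>xi1 xi2. Sm P 0 xi1 \<and> xi1 NInf > 0 \<and> Sm P eps xi2 \<and>
          (\<forall>v\<in>PM P. xi v = xi1 v + xi2 v))"

end

theory Submission
  imports Defs
begin


lemma lessE_trans: "lessE a b \<Longrightarrow> lessE b c \<Longrightarrow> lessE (a::'a::order ext) c"
  by (cases a; cases b; cases c) auto
lemma lessE_irrefl[simp]: "\<not> lessE (a::'a::order ext) a"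
  by (cases a) auto
lemma lessE_asym: "lessE a b \<Longrightarrow> \<not> lessE b (a::'a::order ext)"
  by (cases a; cases b) auto
lemma lessE_NInf2[simp]: "\<not> lessE a NInf" by (cases a) auto
lemma lessE_PInf1[simp]: "\<not> lessE PInf a" by (cases a) auto
lemma lessE_NInf1[simp]: "lessE NInf b \<longleftrightarrow> b \<noteq> NInf" by (cases b) auto
lemma lessE_PInf2[simp]: "lessE a PInf \<longleftrightarrow> a \<noteq> PInf" by (cases a) auto

lemma maxchain_sub: "max_chain P C \<Longrightarrow> C \<subseteq> P"
  unfolding max_chain_def is_chain_def by auto
lemma maxchain_cmp: "max_chain P C \<Longrightarrow> a\<in>C \<Longrightarrow> b\<in>C \<Longrightarrow> a \<le> b \<or> b \<le> a"
  unfolding max_chain_def is_chain_def by auto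
lemma maxchain_ins: "max_chain P C \<Longrightarrow> x \<in> P \<Longrightarrow> (\<forall>c\<in>C. c \<le> x \<or> x \<le> c) \<Longrightarrow> x \<in> C"
proof -
  assume a: "max_chain P C" "x \<in> P" "\<forall>c\<in>C. c \<le> x \<or> x \<le> c"
  have "is_chain P (insert x C)" using a unfolding max_chain_def is_chain_def by auto
  with a(1) have "insert x C = C" unfolding max_chain_def by auto
  thus ?thesis by auto
qed

lemma extend_chain:
  assumes "finite P" "is_chain P D"
  shows "\<exists>C. max_chain P C \<and> D \<subseteq> C"
proof -
  let ?S = "{E. is_chain P E \<and> D \<subseteq> E}"
  have fin: "finite ?S" using assms(1) by (rule finite_subset[rotated, OF finite_Pow_iff[THEN iffD2]]) (auto simp: is_chain_def)
  have ne: "D \<in> ?S" using assms by auto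
  obtain E where E: "E \<in> ?S" "\<forall>E'\<in>?S. card E' \<le> card E"
    using ex_has_greatest_nat[of "\<lambda>E. E \<in> ?S" D card "Suc (card P)"] ne
    by (metis (no_types, lifting) card_mono assms(1) is_chain_def le_imp_less_Suc mem_Collect_eq)
  have "max_chain P E"
    unfolding max_chain_def
  proof (intro conjI allI impI)
    show "is_chain P E" using E by auto
    fix D' assume h: "is_chain P D' \<and> E \<subseteq> D'"
    hence "D' \<in> ?S" using E by auto
    hence "card D' \<le> card E" using E by auto
    moreover have "finite D'" using h assms(1) finite_subset unfolding is_chain_def by blast
    ultimately show "D' = E" using h card_subset_eq by (metis antisym card_mono)
  qed
  thus ?thesis using E by auto
qed

lemma chain_min:
  fixes S :: "'a::order set"
  shows "finite S \<Longrightarrow> S \<noteq> {} \<Longrightarrow> (\<forall>a\<in>S. \<forall>b\<in>S. a \<le> b \<or> b \<le> a) \<Longrightarrow> \<exists>m\<in>S. \<forall>x\<in>S. m \<le> x"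
proof (induction S rule: finite_ne_induct)
  case (singleton x) thus ?case by auto
next
  case (insert x F)
  then obtain m where m: "m\<in>F" "\<forall>y\<in>F. m \<le> y" by auto
  show ?case
  proof (cases "x \<le> m")
    case True thus ?thesis using m by (auto intro: order_trans)
  next
    case False hence "m \<le> x" using insert.prems m by auto
    thus ?thesis using m by auto
  qed
qed

lemma chain_max:
  fixes S :: "'a::order set"
  shows "finite S \<Longrightarrow> S \<noteq> {} \<Longrightarrow> (\<forall>a\<in>S. \<forall>b\<in>S. a \<le> b \<or> b \<le> a) \<Longrightarrow> \<exists>m\<in>S. \<forall>x\<in>S. x \<le> m"
proof (induction S rule: finite_ne_induct)
  case (singleton x) thus ?case by auto
next
  case (insert x F)
  then obtain m where m: "m\<in>F" "\<forall>y\<in>F. y \<le> m" by auto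
  show ?case
  proof (cases "m \<le> x")
    case True thus ?thesis using m by (auto intro: order_trans)
  next
    case False hence "x \<le> m" using insert.prems m by auto
    thus ?thesis using m by auto
  qed
qed



definition ZZ :: "('a::order) set \<Rightarrow> ('a ext \<Rightarrow> int) \<Rightarrow> int \<Rightarrow> int \<Rightarrow> nat \<Rightarrow> (nat \<Rightarrow> 'a) \<Rightarrow> (nat \<Rightarrow> 'a) \<Rightarrow> (nat \<Rightarrow> 'a set) \<Rightarrow> bool" where
 "ZZ P xi eps d s z w C \<longleftrightarrow> (\<forall>i<s. z i \<in> P \<and> w (Suc i) \<in> P \<and> w (Suc i) < z i) \<and>
        (\<forall>i. 1 \<le> i \<and> i < s \<longrightarrow> w i < z i) \<and>
        (\<forall>i\<le>s. C i \<in> Cxi P xi (d - eps)) \<and>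
        (s = 0 \<or> (z 0 \<in> C 0 \<and> w s \<in> C s \<and>
                   (\<forall>i. 1 \<le> i \<and> i < s \<longrightarrow> w i \<in> C i \<and> z i \<in> C i))) \<and>
        (\<forall>i\<le>s. \<forall>c\<in>C i. lessE (lowE w i) (Elem c) \<and> lessE (Elem c) (highE z s i)
              \<longrightarrow> xi (Elem c) = eps)"

lemma Sm_chain: "Sm P m xi \<Longrightarrow> max_chain P C \<Longrightarrow> xiplus xi C \<le> xi NInf - m"
  unfolding Sm_def by force

lemma xiplus_split: "C \<subseteq> P \<Longrightarrow> (\<forall>v\<in>PM P. xi v = xi1 v + xi2 v) \<Longrightarrow> xiplus xi C = xiplus xi1 C + xiplus xi2 C"
  unfolding xiplus_def PM_def by (simp add: sum.distrib[symmetric] subset_iff)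

lemma decomp_facts:
  assumes "\<forall>v\<in>PM P. xi v = xi1 v + xi2 v" "Sm P 0 xi1" "Sm P eps xi2"
  shows "xi NInf = xi1 NInf + xi2 NInf" "\<And>c. c \<in> P \<Longrightarrow> xi (Elem c) = xi1 (Elem c) + xi2 (Elem c)"
    "\<And>c. c \<in> P \<Longrightarrow> xi1 (Elem c) \<ge> 0" "\<And>c. c \<in> P \<Longrightarrow> xi2 (Elem c) \<ge> eps"
  using assms unfolding PM_def Sm_def by auto

lemma tight_xi1:
  assumes "\<forall>v\<in>PM P. xi v = xi1 v + xi2 v" "Sm P 0 xi1" "Sm P eps xi2"
    "max_chain P C" "xiplus xi C = xi NInf - eps"
  shows "xiplus xi1 C = xi1 NInf"
proof -
  have "xiplus xi C = xiplus xi1 C + xiplus xi2 C"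
    using xiplus_split[OF maxchain_sub[OF assms(4)] assms(1)] .
  moreover have "xiplus xi1 C \<le> xi1 NInf" using Sm_chain[OF assms(2,4)] by simp
  moreover have "xiplus xi2 C \<le> xi2 NInf - eps" using Sm_chain[OF assms(3,4)] .
  moreover have "xi NInf = xi1 NInf + xi2 NInf" using decomp_facts[OF assms(1-3)] by simp
  ultimately show ?thesis using assms(5) by linarith
qed

lemma lowest_pos:
  assumes "finite P" "max_chain P C" "xiplus xi1 C = xi1 NInf" "xi1 NInf > 0"
  shows "\<exists>a\<in>C. xi1 (Elem a) > 0 \<and> (\<forall>c\<in>C. c < a \<longrightarrow> xi1 (Elem c) \<le> 0)"
proof -
  let ?S = "{c\<in>C. xi1 (Elem c) > 0}"
  have fC: "finite C" using assms(1) maxchain_sub[OF assms(2)] finite_subset by blast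
  have "?S \<noteq> {}"
  proof
    assume "?S = {}"
    hence "xiplus xi1 C \<le> 0" unfolding xiplus_def by (intro sum_nonpos) auto
    thus False using assms by simp
  qed
  then obtain a where a: "a \<in> ?S" "\<forall>x\<in>?S. a \<le> x"
    using chain_min[of ?S] fC maxchain_cmp[OF assms(2)] by auto
  show ?thesis using a by (intro bexI[of _ a]) force+
qed

lemma L1:
  assumes "finite P" "Sm P 0 xi1" "max_chain P C" "xiplus xi1 C = xi1 NInf" "a \<in> C"
    "\<forall>c\<in>C. c < a \<longrightarrow> xi1 (Elem c) \<le> 0" "b \<in> P" "xi1 (Elem b) > 0" "b < a"
  shows False
proof -
  let ?U = "{c\<in>C. a \<le> c}"
  let ?D0 = "insert b ?U"
  have fC: "finite C" using assms(1) maxchain_sub[OF assms(3)] finite_subset by blast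
  have nn: "\<And>c. c \<in> P \<Longrightarrow> xi1 (Elem c) \<ge> 0" using assms(2) unfolding Sm_def by auto
  have "is_chain P ?D0" unfolding is_chain_def
    using maxchain_sub[OF assms(3)] maxchain_cmp[OF assms(3)] assms(7,9)
    by (auto intro: order.strict_implies_order order_trans less_le_trans)
  then obtain D where D: "max_chain P D" "?D0 \<subseteq> D" using extend_chain assms(1) by blast
  have fD: "finite D" using assms(1) maxchain_sub[OF D(1)] finite_subset by blast
  have "xiplus xi1 ?D0 \<le> xiplus xi1 D" unfolding xiplus_def
    using D maxchain_sub[OF D(1)] nn by (intro sum_mono2[OF fD]) auto
  moreover have "xiplus xi1 ?D0 = xi1 (Elem b) + xiplus xi1 ?U"
    unfolding xiplus_def using fC assms(9) by (subst sum.insert) auto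
  moreover have "xiplus xi1 C = xiplus xi1 ?U + xiplus xi1 {c\<in>C. \<not> a \<le> c}"
    unfolding xiplus_def using sum.Int_Diff[OF fC, of _ "{c. a \<le> c}"]
    by (simp add: Int_def set_diff_eq)
  moreover have "xiplus xi1 {c\<in>C. \<not> a \<le> c} \<le> 0"
    unfolding xiplus_def using assms(5,6) maxchain_cmp[OF assms(3)]
    by (intro sum_nonpos) (metis (mono_tags, lifting) mem_Collect_eq order_le_less)
  moreover have "xiplus xi1 D \<le> xi1 NInf" using Sm_chain[OF assms(2) D(1)] by simp
  ultimately show False using assms(4,8) by linarith
qed



lemma zz_generator:
  assumes fin: "finite P" and S: "Sm P eps xi" and Z: "ZZ P xi eps (xi NInf) s z w C"
  shows "is_generator P eps xi"
  unfolding is_generator_def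
proof (intro conjI notI)
  show "Sm P eps xi" by fact
  assume "\<exists>xi1 xi2. Sm P 0 xi1 \<and> xi1 NInf > 0 \<and> Sm P eps xi2 \<and> (\<forall>v\<in>PM P. xi v = xi1 v + xi2 v)"
  then obtain xi1 xi2 where dec: "Sm P 0 xi1" "xi1 NInf > 0" "Sm P eps xi2" "\<forall>v\<in>PM P. xi v = xi1 v + xi2 v"
    by blast
  note df = decomp_facts[OF dec(4,1,3)]
  have Z1: "\<And>i. i<s \<Longrightarrow> z i \<in> P \<and> w (Suc i) \<in> P \<and> w (Suc i) < z i"
   and Z3: "\<And>i. i\<le>s \<Longrightarrow> C i \<in> Cxi P xi (xi NInf - eps)"
   and Z4: "s = 0 \<or> (z 0 \<in> C 0 \<and> w s \<in> C s \<and> (\<forall>i. 1 \<le> i \<and> i < s \<longrightarrow> w i \<in> C i \<and> z i \<in> C i))"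
   and Z5: "\<And>i c. i\<le>s \<Longrightarrow> c\<in>C i \<Longrightarrow> lessE (lowE w i) (Elem c) \<Longrightarrow> lessE (Elem c) (highE z s i) \<Longrightarrow> xi (Elem c) = eps"
    using Z unfolding ZZ_def by blast+
  have mc: "\<And>i. i \<le> s \<Longrightarrow> max_chain P (C i)" using Z3 unfolding Cxi_def by auto
  have t1: "\<And>i. i \<le> s \<Longrightarrow> xiplus xi1 (C i) = xi1 NInf"
    using Z3 tight_xi1[OF dec(4,1,3)] unfolding Cxi_def by auto
  have lp: "\<And>i. i \<le> s \<Longrightarrow> \<exists>a\<in>C i. xi1 (Elem a) > 0 \<and> (\<forall>c\<in>C i. c < a \<longrightarrow> xi1 (Elem c) \<le> 0)"
    using lowest_pos[OF fin mc t1 dec(2)] by blast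
  have ne: "\<And>i a. i \<le> s \<Longrightarrow> a \<in> C i \<Longrightarrow> xi1 (Elem a) > 0 \<Longrightarrow> xi (Elem a) \<noteq> eps"
    using df maxchain_sub[OF mc] by force
  show False
  proof (cases "s = 0")
    case True
    obtain a where a: "a \<in> C 0" "xi1 (Elem a) > 0" using lp[of 0] by auto
    have "xi (Elem a) = eps" using Z5[of 0 a] a True by (simp add: lowE_def highE_def)
    thus False using ne[of 0 a] a True by simp
  next
    case False
    have zC: "z 0 \<in> C 0" "w s \<in> C s" "\<And>i. 1 \<le> i \<Longrightarrow> i < s \<Longrightarrow> w i \<in> C i \<and> z i \<in> C i"
      using Z4 False by auto
    have wC: "\<And>i. 1 \<le> i \<Longrightarrow> i \<le> s \<Longrightarrow> w i \<in> C i"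
      using zC by (metis le_neq_implies_less)
    have zC': "\<And>i. i < s \<Longrightarrow> z i \<in> C i"
      using zC by (metis One_nat_def Suc_leI neq0_conv)
    have step: "w (Suc i) < a'"
      if i: "i < s" and a: "a \<in> C i" "xi1 (Elem a) > 0" "\<forall>c\<in>C i. c < a \<longrightarrow> xi1 (Elem c) \<le> 0" "z i \<le> a"
        and a': "a' \<in> C (Suc i)" "xi1 (Elem a') > 0" for i a a'
    proof -
      have wi: "w (Suc i) \<in> C (Suc i)" using wC[of "Suc i"] i by simp
      have "\<not> a' \<le> w (Suc i)"
      proof
        assume "a' \<le> w (Suc i)"
        hence "a' < a" using Z1[OF i] a(4) by (meson le_less_trans less_le_trans)
        moreover have "a' \<in> P" using a' maxchain_sub[OF mc[of "Suc i"]] i by auto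
        ultimately show False using L1[OF fin dec(1) mc[of i] t1[of i] a(1) a(3) _ a'(2)] i by auto
      qed
      have ms: "max_chain P (C (Suc i))" using mc i by simp
      thus ?thesis using maxchain_cmp[OF ms wi a'(1)] \<open>\<not> a' \<le> w (Suc i)\<close> by (auto simp: order_le_less)
    qed
    have key: "\<forall>i<s. \<exists>a\<in>C i. xi1 (Elem a) > 0 \<and> (\<forall>c\<in>C i. c < a \<longrightarrow> xi1 (Elem c) \<le> 0) \<and> z i \<le> a"
    proof (intro allI impI)
      fix i assume "i < s"
      thus "\<exists>a\<in>C i. xi1 (Elem a) > 0 \<and> (\<forall>c\<in>C i. c < a \<longrightarrow> xi1 (Elem c) \<le> 0) \<and> z i \<le> a"
      proof (induction i)
        case 0
        obtain a where a: "a \<in> C 0" "xi1 (Elem a) > 0" "\<forall>c\<in>C 0. c < a \<longrightarrow> xi1 (Elem c) \<le> 0"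
          using lp[of 0] by auto
        have "\<not> a < z 0"
        proof
          assume "a < z 0"
          hence "xi (Elem a) = eps" using Z5[of 0 a] a 0 by (simp add: lowE_def highE_def)
          thus False using ne[of 0 a] a by simp
        qed
        hence "z 0 \<le> a" using maxchain_cmp[OF mc[OF le0] a(1) zC(1)] by (auto simp add: order_le_less)
        thus ?case using a by blast
      next
        case (Suc i)
        then obtain a where a: "a \<in> C i" "xi1 (Elem a) > 0" "\<forall>c\<in>C i. c < a \<longrightarrow> xi1 (Elem c) \<le> 0" "z i \<le> a"
          by auto
        obtain a' where a': "a' \<in> C (Suc i)" "xi1 (Elem a') > 0" "\<forall>c\<in>C (Suc i). c < a' \<longrightarrow> xi1 (Elem c) \<le> 0"
          using lp[of "Suc i"] Suc.prems by auto
        have wa: "w (Suc i) < a'" using step[of i a a'] a a' Suc.prems by auto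
        have "\<not> a' < z (Suc i)"
        proof
          assume "a' < z (Suc i)"
          hence "xi (Elem a') = eps" using Z5[of "Suc i" a'] a' wa Suc.prems by (simp add: lowE_def highE_def)
          thus False using ne[of "Suc i" a'] a' Suc.prems by simp
        qed
        hence "z (Suc i) \<le> a'" using maxchain_cmp[OF mc[OF less_imp_le[OF Suc.prems]] a'(1) zC'[OF Suc.prems]]
          by (auto simp: order_le_less)
        thus ?case using a' by blast
      qed
    qed
    obtain i where i: "s = Suc i" using False not0_implies_Suc by blast
    obtain a where a: "a \<in> C i" "xi1 (Elem a) > 0" "\<forall>c\<in>C i. c < a \<longrightarrow> xi1 (Elem c) \<le> 0" "z i \<le> a"
      using key i by auto
    obtain a' where a': "a' \<in> C s" "xi1 (Elem a') > 0"
      using lp[of s] by auto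
    have wa: "w s < a'" using step[of i a a'] a a' i by auto
    have "xi (Elem a') = eps" using Z5[of s a'] a' wa i by (simp add: lowE_def highE_def)
    thus False using ne[of s a'] a' by simp
  qed
qed



inductive Rch :: "('a::order) set \<Rightarrow> ('a ext \<Rightarrow> int) \<Rightarrow> int \<Rightarrow> int \<Rightarrow> 'a \<Rightarrow> bool"
  for P xi eps d where
  base: "C \<in> Cxi P xi (d - eps) \<Longrightarrow> z \<in> C \<Longrightarrow> xi (Elem z) \<noteq> eps \<Longrightarrow>
     (\<forall>c\<in>C. c < z \<longrightarrow> xi (Elem c) = eps) \<Longrightarrow> Rch P xi eps d z"
| step: "Rch P xi eps d r \<Longrightarrow> C \<in> Cxi P xi (d - eps) \<Longrightarrow> w \<in> C \<Longrightarrow> w < r \<Longrightarrow> z \<in> C \<Longrightarrow> w < z \<Longrightarrow>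
     xi (Elem z) \<noteq> eps \<Longrightarrow> (\<forall>c\<in>C. w < c \<and> c < z \<longrightarrow> xi (Elem c) = eps) \<Longrightarrow> Rch P xi eps d z"

lemma Rch_P: "Rch P xi eps d z \<Longrightarrow> z \<in> P \<and> xi (Elem z) \<noteq> eps"
  by (induction rule: Rch.induct) (auto simp: Cxi_def dest!: maxchain_sub)

definition PZ :: "('a::order) set \<Rightarrow> ('a ext \<Rightarrow> int) \<Rightarrow> int \<Rightarrow> int \<Rightarrow> nat \<Rightarrow> (nat \<Rightarrow> 'a) \<Rightarrow> (nat \<Rightarrow> 'a) \<Rightarrow> (nat \<Rightarrow> 'a set) \<Rightarrow> bool" where
 "PZ P xi eps d k y x Cs \<longleftrightarrow> (\<forall>i<k. y i \<in> P \<and> x (Suc i) \<in> P \<and> x (Suc i) < y i) \<and>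
    (\<forall>i. 1 \<le> i \<and> i \<le> k \<longrightarrow> x i < y i) \<and> (\<forall>i\<le>k. Cs i \<in> Cxi P xi (d - eps)) \<and> y 0 \<in> Cs 0 \<and>
    (\<forall>i. 1 \<le> i \<and> i \<le> k \<longrightarrow> x i \<in> Cs i \<and> y i \<in> Cs i) \<and>
    (\<forall>i\<le>k. \<forall>c\<in>Cs i. lessE (lowE x i) (Elem c) \<and> c < y i \<longrightarrow> xi (Elem c) = eps)"

lemma Cxi_P: "C \<in> Cxi P xi m \<Longrightarrow> c \<in> C \<Longrightarrow> c \<in> P"
  unfolding Cxi_def using maxchain_sub by blast

lemma PZ_yk: "PZ P xi eps d k y x Cs \<Longrightarrow> y k \<in> P"
  unfolding PZ_def by (cases k) (auto intro: Cxi_P)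

lemma Rch_PZ: "Rch P xi eps d z \<Longrightarrow> \<exists>k y x Cs. PZ P xi eps d k y x Cs \<and> y k = z"
proof (induction rule: Rch.induct)
  case (base C z)
  show ?case
    by (rule exI[of _ 0], rule exI[of _ "\<lambda>_. z"], rule exI[of _ "\<lambda>_. z"], rule exI[of _ "\<lambda>_. C"])
      (use base in \<open>auto simp: PZ_def lowE_def\<close>)
next
  case (step r C w z)
  then obtain k y x Cs where pz: "PZ P xi eps d k y x Cs" "y k = r" by blast
  have rP: "r \<in> P" using PZ_yk[OF pz(1)] pz(2) by simp
  have wP: "w \<in> P" using step Cxi_P by blast
  have "PZ P xi eps d (Suc k) (y(Suc k := z)) (x(Suc k := w)) (Cs(Suc k := C))"
    using pz step rP wP unfolding PZ_def
    by (auto simp: lowE_def less_Suc_eq le_Suc_eq)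
  thus ?case by (intro exI[of _ "Suc k"] exI) auto
qed

lemma c0: "C \<in> Cxi P xi (d - eps) \<Longrightarrow> \<forall>c\<in>C. xi (Elem c) = eps \<Longrightarrow> ZZ P xi eps d 0 z w (\<lambda>_. C)"
  unfolding ZZ_def by auto

lemma c1:
  assumes "PZ P xi eps d k y x Cs" "C \<in> Cxi P xi (d - eps)" "w \<in> C" "w < y k"
    "\<forall>c\<in>C. w < c \<longrightarrow> xi (Elem c) = eps"
  shows "ZZ P xi eps d (Suc k) y (x(Suc k := w)) (Cs(Suc k := C))"
proof -
  have yk: "y k \<in> P" using PZ_yk[OF assms(1)] .
  have wP: "w \<in> P" using assms Cxi_P by blast
  show ?thesis using assms yk wP unfolding PZ_def ZZ_def
    by (auto simp: lowE_def highE_def less_Suc_eq le_Suc_eq)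
qed



lemma exists_top:
  assumes fin: "finite P" and S: "Sm P eps xi" and d: "d = xi NInf"
    and noZ: "\<not> (\<exists>s z w C. ZZ P xi eps d s z w C)"
    and C: "C \<in> Cxi P xi (d - eps)"
  shows "\<exists>a\<in>C. Rch P xi eps d a \<and> \<not> (\<exists>r. Rch P xi eps d r \<and> a < r)"
proof -
  have mc: "max_chain P C" using C unfolding Cxi_def by auto
  have fC: "finite C" using fin maxchain_sub[OF mc] finite_subset by blast
  have cmp: "\<forall>a\<in>S. \<forall>b\<in>S. a \<le> b \<or> b \<le> a" if "S \<subseteq> C" for S using that maxchain_cmp[OF mc] by blast
  let ?W = "{w\<in>C. \<exists>r. Rch P xi eps d r \<and> w < r}"
  show ?thesis
  proof (cases "?W = {}")
    case True
    let ?U = "{c\<in>C. xi (Elem c) \<noteq> eps}"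
    have "?U \<noteq> {}"
    proof
      assume "?U = {}"
      hence "ZZ P xi eps d 0 undefined undefined (\<lambda>_. C)" using c0[OF C] by auto
      thus False using noZ by blast
    qed
    then obtain a where a: "a \<in> ?U" "\<forall>x\<in>?U. a \<le> x"
      using chain_min[of ?U] fC cmp[of ?U] by auto
    have "Rch P xi eps d a"
      by (rule Rch.base[OF C]) (use a in \<open>auto dest: leD\<close>)
    moreover have "\<not> (\<exists>r. Rch P xi eps d r \<and> a < r)" using True a by auto
    ultimately show ?thesis using a by auto
  next
    case False
    then obtain w where w: "w \<in> ?W" "\<forall>x\<in>?W. x \<le> w"
      using chain_max[of ?W] fC cmp[of ?W] by auto
    then obtain r where r: "Rch P xi eps d r" "w < r" by auto
    let ?U = "{c\<in>C. w < c \<and> xi (Elem c) \<noteq> eps}"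
    have "?U \<noteq> {}"
    proof
      assume "?U = {}"
      obtain k y x Cs where pz: "PZ P xi eps d k y x Cs" "y k = r" using Rch_PZ[OF r(1)] by blast
      have "ZZ P xi eps d (Suc k) y (x(Suc k := w)) (Cs(Suc k := C))"
        using c1[OF pz(1) C _ _] w r pz(2) \<open>?U = {}\<close> by auto
      thus False using noZ by blast
    qed
    then obtain a where a: "a \<in> ?U" "\<forall>x\<in>?U. a \<le> x"
      using chain_min[of ?U] fC cmp[of ?U] by auto
    have "Rch P xi eps d a"
      by (rule Rch.step[OF r(1) C _ r(2)]) (use a w in \<open>auto dest: leD\<close>)
    moreover have "\<not> (\<exists>r. Rch P xi eps d r \<and> a < r)"
    proof
      assume "\<exists>r. Rch P xi eps d r \<and> a < r"
      hence "a \<in> ?W" using a by auto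
      hence "a \<le> w" using w by auto
      thus False using a by auto
    qed
    ultimately show ?thesis using a by auto
  qed
qed

lemma generator_zz:
  assumes fin: "finite P" and S: "Sm P eps xi" and d: "d = xi NInf"
    and noZ: "\<not> (\<exists>s z w C. ZZ P xi eps d s z w C)"
  shows "\<not> is_generator P eps xi"
proof -
  define A where "A = {a. Rch P xi eps d a \<and> \<not> (\<exists>r. Rch P xi eps d r \<and> a < r)}"
  define xi1 :: "'a ext \<Rightarrow> int" where "xi1 v = (if v = NInf then 1 else if (\<exists>a\<in>A. v = Elem a) then 1 else 0)" for v
  define xi2 where "xi2 v = xi v - xi1 v" for v
  have x1E: "xi1 (Elem c) = (if c \<in> A then 1 else 0)" for c unfolding xi1_def by auto
  have sum1: "xiplus xi1 C = int (card (C \<inter> A))" if "finite C" for C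
    unfolding xiplus_def x1E using that by (simp add: sum.If_cases)
  have card1: "card (C \<inter> A) \<le> 1" if "max_chain P C" "finite C" for C
  proof -
    have "\<forall>a\<in>C \<inter> A. \<forall>b\<in>C \<inter> A. a = b"
    proof (intro ballI)
      fix a b assume ab: "a \<in> C \<inter> A" "b \<in> C \<inter> A"
      hence "a \<le> b \<or> b \<le> a" using maxchain_cmp[OF that(1)] by auto
      thus "a = b" using ab unfolding A_def by (auto simp: order_le_less)
    qed
    thus ?thesis using card_le_Suc0_iff_eq[of "C \<inter> A"] that by auto
  qed
  have fC: "finite C" if "max_chain P C" for C using fin maxchain_sub[OF that] finite_subset by blast
  have tightA: "C \<inter> A \<noteq> {}" if "max_chain P C" "xiplus xi C = d - eps" for C
    using exists_top[OF fin S d noZ, of C] that unfolding A_def Cxi_def by auto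
  have Sm1: "Sm P 0 xi1" unfolding Sm_def
  proof (intro conjI ballI allI impI)
    fix x show "xi1 (Elem x) \<ge> 0" unfolding x1E by auto
  next
    fix C assume "max_chain P C"
    thus "xiplus xi1 C + 0 \<le> xi1 NInf" using sum1 card1 fC unfolding xi1_def by force
  qed
  have Sm2: "Sm P eps xi2" unfolding Sm_def
  proof (intro conjI ballI allI impI)
    fix x assume "x \<in> P"
    hence "xi (Elem x) \<ge> eps" using S unfolding Sm_def by auto
    moreover have "x \<in> A \<Longrightarrow> xi (Elem x) \<noteq> eps" unfolding A_def using Rch_P by blast
    ultimately show "xi2 (Elem x) \<ge> eps" unfolding xi2_def x1E by auto
  next
    fix C assume mc: "max_chain P C"
    have "xiplus xi2 C = xiplus xi C - xiplus xi1 C" unfolding xiplus_def xi2_def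
      by (simp add: sum_subtractf)
    moreover have "xiplus xi C \<le> d - eps" using Sm_chain[OF S mc] d by simp
    moreover have "xiplus xi C = d - eps \<Longrightarrow> card (C \<inter> A) \<ge> 1"
      using tightA[OF mc] fC[OF mc] by (simp add: Suc_le_eq card_gt_0_iff)
    ultimately show "xiplus xi2 C + eps \<le> xi2 NInf"
      using sum1[OF fC[OF mc]] d unfolding xi2_def xi1_def by force
  qed
  have "\<exists>xi1 xi2. Sm P 0 xi1 \<and> xi1 NInf > 0 \<and> Sm P eps xi2 \<and> (\<forall>v\<in>PM P. xi v = xi1 v + xi2 v)"
    by (rule exI[of _ xi1], rule exI[of _ xi2]) (use Sm1 Sm2 in \<open>auto simp: xi2_def xi1_def\<close>)
  thus ?thesis unfolding is_generator_def by blast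
qed



definition memE :: "'a set \<Rightarrow> 'a ext \<Rightarrow> bool" where
  "memE C a \<longleftrightarrow> a = NInf \<or> a = PInf \<or> (\<exists>c\<in>C. a = Elem c)"
definition btw :: "('a::order) set \<Rightarrow> 'a ext \<Rightarrow> 'a ext \<Rightarrow> 'a set" where
  "btw C a b = {c\<in>C. lessE a (Elem c) \<and> lessE (Elem c) b}"
definition lowp :: "('a::order) set \<Rightarrow> 'a ext \<Rightarrow> 'a set" where
  "lowp C a = {c\<in>C. Elem c = a \<or> lessE (Elem c) a}"
definition highp :: "('a::order) set \<Rightarrow> 'a ext \<Rightarrow> 'a set" where
  "highp C b = {c\<in>C. Elem c = b \<or> lessE b (Elem c)}"
fun unE :: "'a ext \<Rightarrow> 'a" where "unE (Elem p) = p" | "unE _ = undefined"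
definition intr :: "'a ext list \<Rightarrow> nat \<Rightarrow> 'a set" where
  "intr zs t = (\<lambda>i. unE (zs ! i)) ` {1..<t}"

lemma covers_lessE: "covers P a b \<Longrightarrow> lessE a b" unfolding covers_def by auto
lemma covers_PE: "covers P a b \<Longrightarrow> a \<in> PE P \<and> b \<in> PE P" unfolding covers_def by auto

lemma sc_less:
  assumes "\<forall>i<t. covers P (zs!i) (zs!Suc i)"
  shows "i < j \<Longrightarrow> j \<le> t \<Longrightarrow> lessE (zs!i) (zs!j)"
proof (induction j)
  case 0 thus ?case by simp
next
  case (Suc j)
  have "covers P (zs!j) (zs!Suc j)" using assms Suc.prems by auto
  hence c: "lessE (zs!j) (zs!Suc j)" by (rule covers_lessE)
  show ?case
  proof (cases "i = j")
    case True thus ?thesis using c by simp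
  next
    case False thus ?thesis using Suc c lessE_trans by fastforce
  qed
qed

lemma sc_mem:
  assumes "\<forall>i<t. covers P (zs!i) (zs!Suc i)" "0 < i" "i < t"
  shows "zs!i = Elem (unE (zs!i)) \<and> unE (zs!i) \<in> P"
proof -
  have "zs!i \<in> PE P" using assms covers_PE by blast
  moreover have "lessE (zs!0) (zs!i)" using sc_less[OF assms(1)] assms by simp
  moreover have "lessE (zs!i) (zs!t)" using sc_less[OF assms(1)] assms by simp
  ultimately show ?thesis unfolding PE_def by auto
qed

lemma inter_sub: "\<forall>i<t. covers P (zs!i) (zs!Suc i) \<Longrightarrow> intr zs t \<subseteq> P"
proof
  fix p assume c: "\<forall>i<t. covers P (zs!i) (zs!Suc i)" and "p \<in> intr zs t"
  then obtain i where "i \<in> {1..<t}" "p = unE (zs!i)" unfolding intr_def by auto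
  thus "p \<in> P" using sc_mem[OF c, of i] by auto
qed

lemma inter_elem: "\<forall>i<t. covers P (zs!i) (zs!Suc i) \<Longrightarrow> p \<in> intr zs t \<Longrightarrow> \<exists>i. 0 < i \<and> i < t \<and> zs!i = Elem p"
proof -
  assume c: "\<forall>i<t. covers P (zs!i) (zs!Suc i)" and "p \<in> intr zs t"
  then obtain i where i: "i \<in> {1..<t}" "p = unE (zs!i)" unfolding intr_def by auto
  thus ?thesis using sc_mem[OF c, of i] by (intro exI[of _ i]) auto
qed

lemma inter_elem2: "\<forall>i<t. covers P (zs!i) (zs!Suc i) \<Longrightarrow> 0 < i \<Longrightarrow> i < t \<Longrightarrow> zs!i = Elem p \<Longrightarrow> p \<in> intr zs t"
  unfolding intr_def by (rule image_eqI[of _ _ i]) auto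

lemma card_inter:
  assumes "\<forall>i<t. covers P (zs!i) (zs!Suc i)"
  shows "card (intr zs t) = t - 1"
proof -
  have "inj_on (\<lambda>i. unE (zs ! i)) {1..<t}"
  proof (rule inj_onI)
    fix i j assume h: "i \<in> {1..<t}" "j \<in> {1..<t}" "unE (zs ! i) = unE (zs ! j)"
    have ii: "0 < i" "i < t" "0 < j" "j < t" using h by auto
    have "zs!i = zs!j" using sc_mem[OF assms ii(1,2)] sc_mem[OF assms ii(3,4)] h(3) by metis
    show "i = j"
    proof (rule ccontr)
      assume "i \<noteq> j"
      hence "i < j \<or> j < i" by auto
      thus False
      proof
        assume "i < j" thus False using sc_less[OF assms, of i j] ii \<open>zs!i = zs!j\<close> by simp
      next
        assume "j < i" thus False using sc_less[OF assms, of j i] ii \<open>zs!i = zs!j\<close> by simp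
      qed
    qed
  qed
  thus ?thesis unfolding intr_def by (simp add: card_image)
qed

lemma sc_bound: "finite P \<Longrightarrow> satchain P a b t \<Longrightarrow> t \<le> Suc (card P)"
  unfolding satchain_def
proof (elim exE conjE)
  fix zs assume f: "finite P" and c: "\<forall>i<t. covers P (zs ! i) (zs ! Suc i)"
  have "t - 1 \<le> card P" using card_inter[OF c] card_mono[OF f inter_sub[OF c]] by simp
  thus "t \<le> Suc (card P)" by simp
qed

lemma qdist_fin: "finite P \<Longrightarrow> finite {eps * int t | t. satchain P a b t}"
proof -
  assume f: "finite P"
  have "{eps * int t | t. satchain P a b t} \<subseteq> (\<lambda>t. eps * int t) ` {..Suc (card P)}"
    using sc_bound[OF f] by auto
  thus ?thesis using finite_subset by blast
qed

lemma qdist_ge: "finite P \<Longrightarrow> satchain P a b t \<Longrightarrow> eps * int t \<le> qdist P eps a b"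
  unfolding qdist_def by (rule Max_ge[OF qdist_fin]) auto

lemma qdist_att: "finite P \<Longrightarrow> satchain P a b t \<Longrightarrow> \<exists>t0. satchain P a b t0 \<and> qdist P eps a b = eps * int t0"
proof -
  assume f: "finite P" and s: "satchain P a b t"
  have "qdist P eps a b \<in> {eps * int t | t. satchain P a b t}"
    unfolding qdist_def by (rule Max_in[OF qdist_fin[OF f]]) (use s in auto)
  thus ?thesis by auto
qed

lemma satchain_cons: "covers P a c \<Longrightarrow> satchain P c b t \<Longrightarrow> satchain P a b (Suc t)"
  unfolding satchain_def
proof (elim exE conjE)
  fix zs assume h: "covers P a c" "length zs = Suc t" "zs ! 0 = c" "zs ! t = b" "\<forall>i<t. covers P (zs ! i) (zs ! Suc i)"
  show "\<exists>zs. length zs = Suc (Suc t) \<and> zs ! 0 = a \<and> zs ! Suc t = b \<and> (\<forall>i<Suc t. covers P (zs ! i) (zs ! Suc i))"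
  proof (rule exI[of _ "a # zs"], intro conjI allI impI)
    fix i assume "i < Suc t"
    thus "covers P ((a # zs) ! i) ((a # zs) ! Suc i)" using h by (cases i) auto
  qed (use h in auto)
qed

lemma satchain_one: "covers P a b \<Longrightarrow> satchain P a b 1"
  unfolding satchain_def by (rule exI[of _ "[a,b]"]) auto



definition leE :: "('a::order) ext \<Rightarrow> 'a ext \<Rightarrow> bool" where "leE x y \<longleftrightarrow> x = y \<or> lessE x y"

lemma le_less_E: "leE x y \<Longrightarrow> lessE y z \<Longrightarrow> lessE x z" unfolding leE_def using lessE_trans by blast
lemma less_le_E: "lessE x y \<Longrightarrow> leE y z \<Longrightarrow> lessE x z" unfolding leE_def using lessE_trans by blast

lemma memE_cases: "memE C a \<Longrightarrow> (a = NInf \<Longrightarrow> Q) \<Longrightarrow> (a = PInf \<Longrightarrow> Q) \<Longrightarrow> (\<And>c. c \<in> C \<Longrightarrow> a = Elem c \<Longrightarrow> Q) \<Longrightarrow> Q"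
  unfolding memE_def by blast

lemma memE_PE: "max_chain P C \<Longrightarrow> memE C a \<Longrightarrow> a \<in> PE P"
  unfolding memE_def PE_def using maxchain_sub by blast

lemma btw_empty_covers:
  assumes mc: "max_chain P C" and ma: "memE C a" and mb: "memE C b" and ab: "lessE a b"
    and e: "btw C a b = {}"
  shows "covers P a b"
  unfolding covers_def
proof (intro conjI notI)
  show "a \<in> PE P" "b \<in> PE P" using memE_PE[OF mc] ma mb by auto
  show "lessE a b" by fact
  assume "\<exists>c\<in>PE P. lessE a c \<and> lessE c b"
  then obtain c where c: "c \<in> PE P" "lessE a c" "lessE c b" by blast
  then obtain p where p: "c = Elem p" "p \<in> P" unfolding PE_def by auto
  have "p \<notin> C" using e c p unfolding btw_def by auto
  then obtain e' where e': "e' \<in> C" "\<not> (e' \<le> p \<or> p \<le> e')" using maxchain_ins[OF mc p(2)] by blast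
  have "lessE a (Elem e')"
  proof (rule memE_cases[OF ma])
    fix a' assume a': "a' \<in> C" "a = Elem a'"
    hence "a' < p" using c p by simp
    moreover have "e' \<le> a' \<or> a' \<le> e'" using maxchain_cmp[OF mc a'(1) e'(1)] by auto
    ultimately have "a' < e'" using e' a' by (metis order.strict_trans1 order_le_less)
    thus ?thesis using a' by simp
  qed (use ab in auto)
  moreover have "lessE (Elem e') b"
  proof (rule memE_cases[OF mb])
    fix b' assume b': "b' \<in> C" "b = Elem b'"
    hence "p < b'" using c p by simp
    moreover have "e' \<le> b' \<or> b' \<le> e'" using maxchain_cmp[OF mc b'(1) e'(1)] by auto
    ultimately have "e' < b'" using e' b' by (metis order.strict_trans2 order_le_less)
    thus ?thesis using b' by simp
  qed (use ab in auto)
  ultimately show False using e e' unfolding btw_def by auto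
qed

lemma along:
  assumes fin: "finite P" and mc: "max_chain P C"
  shows "memE C a \<Longrightarrow> memE C b \<Longrightarrow> lessE a b \<Longrightarrow> satchain P a b (Suc (card (btw C a b)))"
proof (induction "card (btw C a b)" arbitrary: a)
  case 0
  have "finite (btw C a b)" by (rule finite_subset[OF _ fin]) (use maxchain_sub[OF mc] in \<open>auto simp: btw_def\<close>)
  hence "btw C a b = {}" using 0 by simp
  thus ?case using btw_empty_covers[OF mc 0(2-4)] satchain_one 0(1)[symmetric] by simp
next
  case (Suc n a)
  have fb: "finite (btw C a b)" by (rule finite_subset[OF _ fin]) (use maxchain_sub[OF mc] in \<open>auto simp: btw_def\<close>)
  hence ne: "btw C a b \<noteq> {}" using Suc(2) by auto
  obtain c where c: "c \<in> btw C a b" "\<forall>x\<in>btw C a b. c \<le> x"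
    using chain_min[OF fb ne] maxchain_cmp[OF mc] unfolding btw_def by blast
  have cC: "c \<in> C" "lessE a (Elem c)" "lessE (Elem c) b" using c(1) unfolding btw_def by auto
  have eq: "btw C (Elem c) b = btw C a b - {c}"
  proof
    show "btw C (Elem c) b \<subseteq> btw C a b - {c}"
    proof
      fix x assume "x \<in> btw C (Elem c) b"
      hence x: "x \<in> C" "c < x" "lessE (Elem x) b" unfolding btw_def by auto
      have "lessE a (Elem x)" using lessE_trans[OF cC(2), of "Elem x"] x by simp
      thus "x \<in> btw C a b - {c}" using x unfolding btw_def by auto
    qed
    show "btw C a b - {c} \<subseteq> btw C (Elem c) b"
      unfolding btw_def using c(2) unfolding btw_def by (auto simp: order_le_less)
  qed
  have cn: "n = card (btw C (Elem c) b)" using eq Suc(2) c(1) fb by simp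
  have mE: "memE C (Elem c)" unfolding memE_def using cC by auto
  have IH: "satchain P (Elem c) b (Suc n)" using Suc(1)[OF cn mE Suc(4) cC(3)] cn by simp
  have "btw C a (Elem c) = {}"
  proof (rule ccontr)
    assume "btw C a (Elem c) \<noteq> {}"
    then obtain x where x: "x \<in> C" "lessE a (Elem x)" "x < c" unfolding btw_def by auto
    hence "x \<in> btw C a b" using cC lessE_trans[of "Elem x" "Elem c" b] unfolding btw_def by auto
    thus False using c(2) x(3) by (auto dest: leD)
  qed
  hence "covers P a (Elem c)" using btw_empty_covers[OF mc Suc(3) mE cC(2)] by simp
  thus ?case using satchain_cons[OF _ IH] Suc(2)[symmetric] by simp
qed

lemma sat_exists:
  assumes fin: "finite P" and a: "a \<in> PE P" and b: "b \<in> PE P" and ab: "lessE a b"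
  shows "\<exists>t. satchain P a b t"
proof -
  let ?D = "{p\<in>P. Elem p = a \<or> Elem p = b}"
  have "is_chain P ?D" unfolding is_chain_def using ab by (auto simp: order_le_less)
  then obtain C where C: "max_chain P C" "?D \<subseteq> C" using extend_chain[OF fin] by blast
  have "memE C a" "memE C b" using a b C(2) unfolding PE_def memE_def by auto
  thus ?thesis using along[OF fin C(1)] ab by blast
qed



lemma lowpD: "c \<in> lowp C a \<Longrightarrow> c \<in> C \<and> leE (Elem c) a" unfolding lowp_def leE_def by auto
lemma highpD: "c \<in> highp C b \<Longrightarrow> c \<in> C \<and> leE b (Elem c)" unfolding highp_def leE_def by auto

lemma inter_btw:
  assumes "\<forall>i<t. covers P (zs!i) (zs!Suc i)" "zs!0 = a" "zs!t = b" "p \<in> intr zs t"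
  shows "lessE a (Elem p) \<and> lessE (Elem p) b"
proof -
  obtain i where i: "0 < i" "i < t" "zs!i = Elem p" using inter_elem[OF assms(1,4)] by blast
  show ?thesis using sc_less[OF assms(1), of 0 i] sc_less[OF assms(1), of i t] i assms(2,3) by simp
qed

lemma lessE_Elem_cmp: "lessE (Elem u) (Elem v) \<Longrightarrow> u \<le> v \<or> v \<le> u" by auto

lemma splice:
  assumes fin: "finite P" and mcC: "max_chain P C" and mcD: "max_chain P D"
    and ma: "memE C a" and mb: "memE D b" and ab: "lessE a b"
    and z0: "zs!0 = a" and zt: "zs!t = b" and cov: "\<forall>i<t. covers P (zs!i) (zs!Suc i)"
  shows "max_chain P (lowp C a \<union> intr zs t \<union> highp D b)"
proof -
  let ?C' = "lowp C a \<union> intr zs t \<union> highp D b"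
  have iP: "intr zs t \<subseteq> P" using inter_sub[OF cov] .
  have ib: "\<And>p. p \<in> intr zs t \<Longrightarrow> lessE a (Elem p) \<and> lessE (Elem p) b"
    using inter_btw[OF cov z0 zt] by blast
  have sub: "?C' \<subseteq> P" using iP maxchain_sub[OF mcC] maxchain_sub[OF mcD]
    unfolding lowp_def highp_def by blast
  have chain: "\<forall>u\<in>?C'. \<forall>v\<in>?C'. u \<le> v \<or> v \<le> u"
  proof (intro ballI)
    fix u v assume u: "u \<in> ?C'" and v: "v \<in> ?C'"
    have ii: "u \<le> v \<or> v \<le> u" if uv: "u \<in> intr zs t" "v \<in> intr zs t" for u v
    proof -
      obtain i where i: "0 < i" "i < t" "zs!i = Elem u" using inter_elem[OF cov uv(1)] by blast
      obtain j where j: "0 < j" "j < t" "zs!j = Elem v" using inter_elem[OF cov uv(2)] by blast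
      have "i < j \<or> i = j \<or> j < i" by arith
      thus ?thesis using sc_less[OF cov, of i j] sc_less[OF cov, of j i] i j by (auto simp: order_le_less)
    qed
    have li: "lessE (Elem u) (Elem v)" if "u \<in> lowp C a" "v \<in> intr zs t" for u v
      using le_less_E[of "Elem u" a "Elem v"] lowpD[OF that(1)] ib[OF that(2)] by blast
    have ih: "lessE (Elem u) (Elem v)" if "u \<in> intr zs t" "v \<in> highp D b" for u v
      using less_le_E[of "Elem u" b "Elem v"] highpD[OF that(2)] ib[OF that(1)] by blast
    have lh: "lessE (Elem u) (Elem v)" if "u \<in> lowp C a" "v \<in> highp D b" for u v
      using le_less_E[OF _ less_le_E[OF ab], of "Elem u" "Elem v"] lowpD[OF that(1)] highpD[OF that(2)] by blast
    show "u \<le> v \<or> v \<le> u"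
      using u v ii li ih lh maxchain_cmp[OF mcC] maxchain_cmp[OF mcD] lowpD highpD
      by (metis UnE lessE_Elem_cmp)
  qed
  show ?thesis unfolding max_chain_def
  proof (intro conjI allI impI)
    show ic: "is_chain P ?C'" unfolding is_chain_def using sub chain by blast
    fix D' assume h: "is_chain P D' \<and> ?C' \<subseteq> D'"
    show "D' = ?C'"
    proof (rule antisym[OF _ h[THEN conjunct2]], rule subsetI)
      fix x assume xD: "x \<in> D'"
      have xP: "x \<in> P" using h xD unfolding is_chain_def by blast
      have cx: "\<And>y. y \<in> ?C' \<Longrightarrow> x \<le> y \<or> y \<le> x" using h xD unfolding is_chain_def by blast
      consider (A) "leE (Elem x) a" | (B) "leE b (Elem x)" | (M) "\<not> leE (Elem x) a" "\<not> leE b (Elem x)" by blast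
      then show "x \<in> ?C'"
      proof cases
        case A
        obtain a' where a': "a' \<in> C" "a = Elem a'"
          using A ab ma unfolding leE_def memE_def by (cases a) auto
        have xa: "x \<le> a'" using A a' unfolding leE_def by auto
        have "\<forall>c\<in>C. c \<le> x \<or> x \<le> c"
        proof
          fix c assume c: "c \<in> C"
          show "c \<le> x \<or> x \<le> c"
          proof (cases "c \<in> lowp C a")
            case True thus ?thesis using cx by blast
          next
            case False
            hence "\<not> c \<le> a'" using c a' unfolding lowp_def by (auto simp: order_le_less)
            hence "a' < c" using maxchain_cmp[OF mcC c a'(1)] by (auto simp: order_le_less)
            thus ?thesis using xa by auto
          qed
        qed
        hence "x \<in> C" using maxchain_ins[OF mcC xP] by blast
        thus ?thesis using A unfolding lowp_def leE_def by auto
      next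
        case B
        obtain b' where b': "b' \<in> D" "b = Elem b'"
          using B ab mb unfolding leE_def memE_def by (cases b) auto
        have xb: "b' \<le> x" using B b' unfolding leE_def by auto
        have "\<forall>c\<in>D. c \<le> x \<or> x \<le> c"
        proof
          fix c assume c: "c \<in> D"
          show "c \<le> x \<or> x \<le> c"
          proof (cases "c \<in> highp D b")
            case True thus ?thesis using cx by blast
          next
            case False
            hence "\<not> b' \<le> c" using c b' unfolding highp_def by (auto simp: order_le_less)
            hence "c < b'" using maxchain_cmp[OF mcD c b'(1)] by (auto simp: order_le_less)
            thus ?thesis using xb by auto
          qed
        qed
        hence "x \<in> D" using maxchain_ins[OF mcD xP] by blast
        thus ?thesis using B unfolding highp_def leE_def by auto
      next
        case M
        have ax: "lessE a (Elem x)"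
        proof (rule memE_cases[OF ma])
          fix a' assume a': "a' \<in> C" "a = Elem a'"
          hence "a' \<in> ?C'" unfolding lowp_def by auto
          hence "x \<le> a' \<or> a' \<le> x" using cx by blast
          thus ?thesis using M a' unfolding leE_def by (auto simp: order_le_less)
        qed (use ab in auto)
        have xb: "lessE (Elem x) b"
        proof (rule memE_cases[OF mb])
          fix b' assume b': "b' \<in> D" "b = Elem b'"
          hence "b' \<in> ?C'" unfolding highp_def by auto
          hence "x \<le> b' \<or> b' \<le> x" using cx by blast
          thus ?thesis using M b' unfolding leE_def by (auto simp: order_le_less)
        qed (use ab in auto)
        let ?K = "{i. i \<le> t \<and> lessE (zs!i) (Elem x)}"
        have fK: "finite ?K" by (rule finite_subset[of _ "{..t}"]) auto
        have K0: "0 \<in> ?K" using ax z0 by simp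
        define k where "k = Max ?K"
        have kK: "k \<in> ?K" unfolding k_def using Max_in[OF fK] K0 by blast
        have kmax: "\<And>i. i \<in> ?K \<Longrightarrow> i \<le> k" unfolding k_def using Max_ge[OF fK] by blast
        have kt: "k < t"
        proof (rule ccontr)
          assume "\<not> k < t" hence "k = t" using kK by simp
          thus False using kK zt xb lessE_asym by fastforce
        qed
        have covk: "covers P (zs!k) (zs!Suc k)" using cov kt by simp
        have PEx: "Elem x \<in> PE P" using xP unfolding PE_def by auto
        show ?thesis
        proof (cases "Suc k = t")
          case True
          thus ?thesis using covk kK xb zt PEx unfolding covers_def by auto
        next
          case False
          hence sk: "Suc k < t" using kt by simp
          obtain p where p: "zs!Suc k = Elem p" "p \<in> P" using sc_mem[OF cov _ sk] by blast
          have pI: "p \<in> intr zs t" using inter_elem2[OF cov _ sk p(1)] by simp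
          hence "x \<le> p \<or> p \<le> x" using cx by blast
          moreover have "\<not> p < x"
          proof
            assume "p < x" hence "Suc k \<in> ?K" using p sk by simp
            thus False using kmax by fastforce
          qed
          moreover have "\<not> x < p"
          proof
            assume "x < p" thus False using covk kK p PEx unfolding covers_def by auto
          qed
          ultimately have "x = p" by (auto simp: order_le_less)
          thus ?thesis using pI by simp
        qed
      qed
    qed
  qed
qed



lemma fin_sub: "finite P \<Longrightarrow> max_chain P C \<Longrightarrow> S \<subseteq> C \<Longrightarrow> finite S"
  using maxchain_sub finite_subset by metis

lemma chain_decomp:
  assumes fin: "finite P" and mc: "max_chain P C" and ma: "memE C a" and mb: "memE C b" and ab: "lessE a b"
  shows "xiplus f C = xiplus f (lowp C a) + xiplus f (btw C a b) + xiplus f (highp C b)"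
proof -
  have cov: "C = lowp C a \<union> btw C a b \<union> highp C b"
  proof (rule antisym[rotated], (auto simp: lowp_def btw_def highp_def)[1], rule subsetI)
    fix c assume c: "c \<in> C"
    have A: "leE (Elem c) a \<or> lessE a (Elem c)"
    proof (rule memE_cases[OF ma])
      fix a' assume "a' \<in> C" "a = Elem a'"
      thus ?thesis using maxchain_cmp[OF mc c] unfolding leE_def by (auto simp: order_le_less)
    qed (use ab in auto)
    have B: "leE b (Elem c) \<or> lessE (Elem c) b"
    proof (rule memE_cases[OF mb])
      fix b' assume "b' \<in> C" "b = Elem b'"
      thus ?thesis using maxchain_cmp[OF mc c] unfolding leE_def by (auto simp: order_le_less)
    qed (use ab in auto)
    show "c \<in> lowp C a \<union> btw C a b \<union> highp C b"
      using A B c unfolding lowp_def btw_def highp_def leE_def by auto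
  qed
  have d1: "lowp C a \<inter> btw C a b = {}" unfolding lowp_def btw_def using lessE_asym by fastforce
  have d2: "(lowp C a \<union> btw C a b) \<inter> highp C b = {}"
  proof (rule ccontr)
    assume "(lowp C a \<union> btw C a b) \<inter> highp C b \<noteq> {}"
    then obtain c where c: "c \<in> lowp C a \<union> btw C a b" "c \<in> highp C b" by blast
    have "leE b (Elem c)" using highpD[OF c(2)] by simp
    moreover have "lessE (Elem c) b" using c(1) lowpD le_less_E[OF _ ab] unfolding btw_def by blast
    ultimately show False using less_le_E[of "Elem c" b "Elem c"] by simp
  qed
  have f1: "finite (lowp C a)" "finite (btw C a b)" "finite (highp C b)"
    using fin_sub[OF fin mc] unfolding lowp_def btw_def highp_def by auto
  have "xiplus f C = xiplus f (lowp C a \<union> btw C a b \<union> highp C b)" using cov by simp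
  also have "\<dots> = xiplus f (lowp C a) + xiplus f (btw C a b) + xiplus f (highp C b)"
    unfolding xiplus_def using f1 d1 d2 by (simp add: sum.union_disjoint)
  finally show ?thesis .
qed

lemma qd_tight:
  assumes fin: "finite P" and mc: "max_chain P C" and ma: "memE C a" and mb: "memE C b" and ab: "lessE a b"
    and eq: "\<forall>c\<in>btw C a b. xi (Elem c) = m"
  shows "xiplus xi C \<le> xiplus xi (lowp C a) + qdist P m a b - m + xiplus xi (highp C b)"
proof -
  have "xiplus xi (btw C a b) = m * int (card (btw C a b))"
    unfolding xiplus_def using eq by simp
  moreover have "m * int (Suc (card (btw C a b))) \<le> qdist P m a b"
    using qdist_ge[OF fin along[OF fin mc ma mb ab]] .
  ultimately show ?thesis using chain_decomp[OF fin mc ma mb ab, of xi] by (simp add: algebra_simps)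
qed

lemma splice_q:
  assumes fin: "finite P" and lb: "\<forall>p\<in>P. xi (Elem p) \<ge> m"
    and mcC: "max_chain P C" and mcD: "max_chain P D"
    and ma: "memE C a" and mb: "memE D b" and ab: "lessE a b"
  shows "\<exists>C'. max_chain P C' \<and> memE C' a \<and> memE C' b \<and>
     lowp C a \<subseteq> C' \<and> highp D b \<subseteq> C' \<and>
     xiplus xi C' = xiplus xi (lowp C a) + xiplus xi (btw C' a b) + xiplus xi (highp D b) \<and>
     m * int (card (btw C' a b)) \<le> xiplus xi (btw C' a b) \<and>
     qdist P m a b = m * (int (card (btw C' a b)) + 1) \<and> (\<forall>c\<in>btw C' a b. xi (Elem c) \<ge> m)"
proof -
  obtain t1 where "satchain P a b t1" using sat_exists[OF fin memE_PE[OF mcC ma] memE_PE[OF mcD mb] ab] by blast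
  then obtain t where st: "satchain P a b t" and qd: "qdist P m a b = m * int t"
    using qdist_att[OF fin] by blast
  then obtain zs where zs: "length zs = Suc t" "zs!0 = a" "zs!t = b" and cov: "\<forall>i<t. covers P (zs!i) (zs!Suc i)"
    unfolding satchain_def by blast
  have t0: "t \<noteq> 0" proof assume "t = 0" thus False using zs ab by simp qed
  let ?C' = "lowp C a \<union> intr zs t \<union> highp D b"
  have mc': "max_chain P ?C'" using splice[OF fin mcC mcD ma mb ab zs(2,3) cov] .
  have ib: "\<And>p. p \<in> intr zs t \<Longrightarrow> lessE a (Elem p) \<and> lessE (Elem p) b"
    using inter_btw[OF cov zs(2,3)] by blast
  have bt: "btw ?C' a b = intr zs t"
  proof
    show "intr zs t \<subseteq> btw ?C' a b" using ib unfolding btw_def by auto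
    show "btw ?C' a b \<subseteq> intr zs t"
    proof
      fix c assume c: "c \<in> btw ?C' a b"
      hence c1: "lessE a (Elem c)" "lessE (Elem c) b" unfolding btw_def by auto
      have "c \<notin> lowp C a" using c1 lowpD less_le_E[OF c1(1)] by fastforce
      moreover have "c \<notin> highp D b" using c1 highpD le_less_E[of b "Elem c" b] lessE_asym by fastforce
      ultimately show "c \<in> intr zs t" using c unfolding btw_def by auto
    qed
  qed
  have d1: "lowp C a \<inter> intr zs t = {}" using ib lowpD less_le_E by fastforce
  have d2: "(lowp C a \<union> intr zs t) \<inter> highp D b = {}"
  proof (rule ccontr)
    assume "(lowp C a \<union> intr zs t) \<inter> highp D b \<noteq> {}"
    then obtain c where c: "c \<in> lowp C a \<union> intr zs t" "c \<in> highp D b" by blast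
    have "leE b (Elem c)" using highpD[OF c(2)] by simp
    moreover have "lessE (Elem c) b" using c(1) lowpD le_less_E[OF _ ab] ib by blast
    ultimately show False using less_le_E[of "Elem c" b "Elem c"] by simp
  qed
  have f1: "finite (lowp C a)" "finite (intr zs t)" "finite (highp D b)"
    using fin_sub[OF fin mcC] fin_sub[OF fin mcD] finite_subset[OF inter_sub[OF cov] fin]
    unfolding lowp_def highp_def by auto
  have sum: "xiplus xi ?C' = xiplus xi (lowp C a) + xiplus xi (intr zs t) + xiplus xi (highp D b)"
    unfolding xiplus_def using f1 d1 d2 by (simp add: sum.union_disjoint)
  have lbi: "\<forall>c\<in>intr zs t. xi (Elem c) \<ge> m" using lb inter_sub[OF cov] by blast
  have "m * int (card (intr zs t)) \<le> xiplus xi (intr zs t)"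
    unfolding xiplus_def using sum_bounded_below[of "intr zs t" m "\<lambda>c. xi (Elem c)"] lbi by (simp add: mult.commute)
  moreover have "card (intr zs t) = t - 1" using card_inter[OF cov] .
  moreover have "memE ?C' a" using ma unfolding memE_def lowp_def by auto
  moreover have "memE ?C' b" using mb unfolding memE_def highp_def by auto
  ultimately show ?thesis using mc' sum bt qd t0 lbi
    by (intro exI[of _ ?C']) (auto simp: of_nat_diff algebra_simps)
qed



definition ZZE :: "('a::order) set \<Rightarrow> ('a ext \<Rightarrow> int) \<Rightarrow> int \<Rightarrow> int \<Rightarrow> nat \<Rightarrow> (nat \<Rightarrow> 'a ext) \<Rightarrow> (nat \<Rightarrow> 'a ext) \<Rightarrow> (nat \<Rightarrow> 'a set) \<Rightarrow> bool" where
 "ZZE P xi eps d t X Y C \<longleftrightarrow> (\<forall>l\<le>t. C l \<in> Cxi P xi (d - eps) \<and> memE (C l) (X l) \<and> memE (C l) (Y l) \<and>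
     lessE (X l) (Y l) \<and> (\<forall>c\<in>btw (C l) (X l) (Y l). xi (Elem c) = eps)) \<and> (\<forall>l<t. lessE (X (Suc l)) (Y l))"

lemma ZZ_ZZE: "ZZ P xi eps d t y x C \<Longrightarrow> ZZE P xi eps d t (lowE x) (highE y t) C"
  unfolding ZZ_def ZZE_def
proof (elim conjE, intro conjI allI impI)
  fix l assume h1: "\<forall>i<t. y i \<in> P \<and> x (Suc i) \<in> P \<and> x (Suc i) < y i"
    and h2: "\<forall>i. 1 \<le> i \<and> i < t \<longrightarrow> x i < y i" and h3: "\<forall>i\<le>t. C i \<in> Cxi P xi (d - eps)"
    and h4: "t = 0 \<or> y 0 \<in> C 0 \<and> x t \<in> C t \<and> (\<forall>i. 1 \<le> i \<and> i < t \<longrightarrow> x i \<in> C i \<and> y i \<in> C i)"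
    and h5: "\<forall>i\<le>t. \<forall>c\<in>C i. lessE (lowE x i) (Elem c) \<and> lessE (Elem c) (highE y t i) \<longrightarrow> xi (Elem c) = eps"
  { assume l: "l \<le> t"
    show "C l \<in> Cxi P xi (d - eps)" using h3 l by simp
    show "memE (C l) (lowE x l)" using h4 l unfolding memE_def lowE_def
      by (cases "l = 0"; cases "l = t") auto
    show "memE (C l) (highE y t l)" using h4 l unfolding memE_def highE_def
      by (cases "l = 0"; cases "l = t") auto
    show "lessE (lowE x l) (highE y t l)" using h2 l unfolding lowE_def highE_def
      by (cases "l = 0"; cases "l = t") auto
    show "\<forall>c\<in>btw (C l) (lowE x l) (highE y t l). xi (Elem c) = eps" using h5 l unfolding btw_def by auto }
  { assume "l < t" thus "lessE (lowE x (Suc l)) (highE y t l)" using h1 unfolding lowE_def highE_def by auto }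
qed

lemma ZZE_ZZ: "ZZE P xi eps d t (lowE x) (highE y t) C \<Longrightarrow> ZZ P xi eps d t y x C"
  unfolding ZZ_def ZZE_def
proof (elim conjE, intro conjI allI impI)
  assume A: "\<forall>l\<le>t. C l \<in> Cxi P xi (d - eps) \<and> memE (C l) (lowE x l) \<and> memE (C l) (highE y t l) \<and>
        lessE (lowE x l) (highE y t l) \<and> (\<forall>c\<in>btw (C l) (lowE x l) (highE y t l). xi (Elem c) = eps)"
    and B: "\<forall>l<t. lessE (lowE x (Suc l)) (highE y t l)"
  have memx: "x l \<in> C l" if "1 \<le> l" "l \<le> t" for l using A[rule_format, of l] that unfolding memE_def lowE_def by auto
  have memy: "y l \<in> C l" if "l < t" for l using A[rule_format, of l] that unfolding memE_def highE_def by auto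
  fix i
  { assume i: "i < t"
    show "y i \<in> P" using memy[OF i] A[rule_format, of i] i Cxi_P by (meson less_imp_le)
    have si: "Suc i \<le> t" using i by simp
    show "x (Suc i) \<in> P" using memx[of "Suc i", OF _ si] A[rule_format, OF si] Cxi_P by auto
    show "x (Suc i) < y i" using B i unfolding lowE_def highE_def by auto }
  { assume "1 \<le> i \<and> i < t" thus "x i < y i" using A[rule_format, of i] unfolding lowE_def highE_def by auto }
  { assume "i \<le> t" thus "C i \<in> Cxi P xi (d - eps)" using A by simp }
  { assume "i \<le> t" thus "\<forall>c\<in>C i. lessE (lowE x i) (Elem c) \<and> lessE (Elem c) (highE y t i) \<longrightarrow> xi (Elem c) = eps"
      using A[rule_format, of i] unfolding btw_def by auto }
next
  assume A: "\<forall>l\<le>t. C l \<in> Cxi P xi (d - eps) \<and> memE (C l) (lowE x l) \<and> memE (C l) (highE y t l) \<and>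
        lessE (lowE x l) (highE y t l) \<and> (\<forall>c\<in>btw (C l) (lowE x l) (highE y t l). xi (Elem c) = eps)"
  have memx: "x l \<in> C l" if "1 \<le> l" "l \<le> t" for l using A[rule_format, of l] that unfolding memE_def lowE_def by auto
  have memy: "y l \<in> C l" if "l < t" for l using A[rule_format, of l] that unfolding memE_def highE_def by auto
  show "t = 0 \<or> y 0 \<in> C 0 \<and> x t \<in> C t \<and> (\<forall>i. 1 \<le> i \<and> i < t \<longrightarrow> x i \<in> C i \<and> y i \<in> C i)"
    using memx memy by auto
qed

lemma lowE_comp: "(\<And>l. f l = 0 \<longleftrightarrow> l = 0) \<Longrightarrow> lowE (x \<circ> f) l = lowE x (f l)"
  unfolding lowE_def by auto
lemma highE_comp: "(\<And>l. f l = t \<longleftrightarrow> l = t') \<Longrightarrow> highE (y \<circ> f) t' l = highE y t (f l)"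
  unfolding highE_def by auto



lemma shortN:
  assumes Z: "ZZE P xi eps d t X Y C" and ij: "i < t" "i + 2 \<le> j" "j \<le> t" and v: "lessE (X j) (Y i)"
  defines "f \<equiv> \<lambda>l. if l \<le> i then l else l + (j - i - 1)"
  shows "ZZE P xi eps d (t - (j - i - 1)) (X \<circ> f) (Y \<circ> f) (C \<circ> f)"
proof -
  have A: "\<And>l. l \<le> t \<Longrightarrow> C l \<in> Cxi P xi (d - eps) \<and> memE (C l) (X l) \<and> memE (C l) (Y l) \<and>
     lessE (X l) (Y l) \<and> (\<forall>c\<in>btw (C l) (X l) (Y l). xi (Elem c) = eps)"
   and B: "\<And>l. l < t \<Longrightarrow> lessE (X (Suc l)) (Y l)" using Z unfolding ZZE_def by auto
  show ?thesis unfolding ZZE_def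
  proof (rule conjI; intro allI impI)
    fix l assume l: "l \<le> t - (j - i - 1)"
    hence "f l \<le> t" unfolding f_def using ij by auto
    from A[OF this] show "(C \<circ> f) l \<in> Cxi P xi (d - eps) \<and> memE ((C \<circ> f) l) ((X \<circ> f) l) \<and> memE ((C \<circ> f) l) ((Y \<circ> f) l) \<and>
     lessE ((X \<circ> f) l) ((Y \<circ> f) l) \<and> (\<forall>c\<in>btw ((C \<circ> f) l) ((X \<circ> f) l) ((Y \<circ> f) l). xi (Elem c) = eps)" by simp
  next
    fix l assume l: "l < t - (j - i - 1)"
    consider "l < i" | "l = i" | "i < l" by arith
    thus "lessE ((X \<circ> f) (Suc l)) ((Y \<circ> f) l)"
    proof cases
      case 1 thus ?thesis using B[of l] ij unfolding f_def by auto
    next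
      case 2
      have "f (Suc l) = j" "f l = i" unfolding f_def using 2 ij by auto
      thus ?thesis using v by simp
    next
      case 3
      have "f (Suc l) = Suc (l + (j - i - 1))" "f l = l + (j - i - 1)" unfolding f_def using 3 by auto
      moreover have "l + (j - i - 1) < t" using l ij by arith
      ultimately show ?thesis using B by simp
    qed
  qed
qed

lemma shortQ:
  assumes Z: "ZZE P xi eps d t X Y C" and ij: "i < j" "j \<le> t"
    and Cs: "Cs \<in> Cxi P xi (d - eps)" "memE Cs (X i)" "memE Cs (Y j)" "lessE (X i) (Y j)"
      "\<forall>c\<in>btw Cs (X i) (Y j). xi (Elem c) = eps"
  defines "fx \<equiv> \<lambda>l. if l \<le> i then l else l + (j - i)"
    and "fy \<equiv> \<lambda>l. if l < i then l else l + (j - i)"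
    and "C' \<equiv> \<lambda>l. if l < i then C l else if l = i then Cs else C (l + (j - i))"
  shows "ZZE P xi eps d (t - (j - i)) (X \<circ> fx) (Y \<circ> fy) C'"
proof -
  have A: "\<And>l. l \<le> t \<Longrightarrow> C l \<in> Cxi P xi (d - eps) \<and> memE (C l) (X l) \<and> memE (C l) (Y l) \<and>
     lessE (X l) (Y l) \<and> (\<forall>c\<in>btw (C l) (X l) (Y l). xi (Elem c) = eps)"
   and B: "\<And>l. l < t \<Longrightarrow> lessE (X (Suc l)) (Y l)" using Z unfolding ZZE_def by auto
  show ?thesis unfolding ZZE_def
  proof (rule conjI; intro allI impI)
    fix l assume l: "l \<le> t - (j - i)"
    consider "l < i" | "l = i" | "i < l" by arith
    thus "C' l \<in> Cxi P xi (d - eps) \<and> memE (C' l) ((X \<circ> fx) l) \<and> memE (C' l) ((Y \<circ> fy) l) \<and>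
     lessE ((X \<circ> fx) l) ((Y \<circ> fy) l) \<and> (\<forall>c\<in>btw (C' l) ((X \<circ> fx) l) ((Y \<circ> fy) l). xi (Elem c) = eps)"
    proof cases
      case 1 thus ?thesis using A[of l] ij unfolding fx_def fy_def C'_def by auto
    next
      case 2 thus ?thesis using Cs ij unfolding fx_def fy_def C'_def by auto
    next
      case 3
      have "l + (j - i) \<le> t" using l ij by arith
      thus ?thesis using A[of "l + (j - i)"] 3 unfolding fx_def fy_def C'_def by auto
    qed
  next
    fix l assume l: "l < t - (j - i)"
    consider "l < i" | "l = i" | "i < l" by arith
    thus "lessE ((X \<circ> fx) (Suc l)) ((Y \<circ> fy) l)"
    proof cases
      case 1 thus ?thesis using B[of l] ij unfolding fx_def fy_def by auto
    next
      case 2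
      have "fx (Suc l) = Suc j" "fy l = j" unfolding fx_def fy_def using 2 ij by auto
      moreover have "j < t" using l 2 ij by arith
      ultimately show ?thesis using B by simp
    next
      case 3
      have "fx (Suc l) = Suc (l + (j - i))" "fy l = l + (j - i)" unfolding fx_def fy_def using 3 by auto
      moreover have "l + (j - i) < t" using l ij by arith
      ultimately show ?thesis using B by simp
    qed
  qed
qed

lemma shortN_ZZ:
  assumes Z: "ZZ P xi eps d t y x C" and ij: "i < t" "i + 2 \<le> j" "j \<le> t" and v: "x j < y i"
  shows "\<exists>t' y' x' C'. t' < t \<and> ZZ P xi eps d t' y' x' C'"
proof -
  define f where "f = (\<lambda>l. if l \<le> i then l else l + (j - i - 1))"
  define t' where "t' = t - (j - i - 1)"
  have v': "lessE (lowE x j) (highE y t i)" using v ij unfolding lowE_def highE_def by auto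
  have Z': "ZZE P xi eps d t' (lowE x \<circ> f) (highE y t \<circ> f) (C \<circ> f)"
    using shortN[OF ZZ_ZZE[OF Z] ij v'] unfolding f_def t'_def by simp
  have e1: "lowE x \<circ> f = lowE (x \<circ> f)" by (rule ext) (simp add: lowE_comp f_def)
  have e2: "highE y t \<circ> f = highE (y \<circ> f) t'"
    by (rule ext, simp, rule highE_comp[symmetric]) (use ij in \<open>auto simp: f_def t'_def\<close>)
  have "ZZ P xi eps d t' (y \<circ> f) (x \<circ> f) (C \<circ> f)" using ZZE_ZZ Z' e1 e2 by metis
  moreover have "t' < t" unfolding t'_def using ij by arith
  ultimately show ?thesis by blast
qed



lemma qseq_base: "qseq P e W Z i i = qdist P e (W i) (Z i)"
  unfolding qseq_def by simp

lemma qseq_Suc: "i \<le> j \<Longrightarrow> qseq P e W Z i (Suc j) = qseq P e W Z i j + qdist P e (W (Suc j)) (Z (Suc j)) - qdist P e (W (Suc j)) (Z j)"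
  unfolding qseq_def by simp

lemma Sm_lb: "Sm P m xi \<Longrightarrow> \<forall>p\<in>P. xi (Elem p) \<ge> m" unfolding Sm_def by auto

lemma tele:
  assumes fin: "finite P" and S: "Sm P eps xi" and d: "d = xi NInf"
    and Z: "ZZE P xi eps d t X Y C" and ij: "i \<le> j" "j \<le> t"
  shows "d - eps \<le> xiplus xi (lowp (C i) (X i)) + qseq P eps X Y i j - eps + xiplus xi (highp (C j) (Y j))"
  using ij
proof (induction j rule: dec_induct)
  case base
  have A: "C i \<in> Cxi P xi (d - eps)" "memE (C i) (X i)" "memE (C i) (Y i)" "lessE (X i) (Y i)"
     "\<forall>c\<in>btw (C i) (X i) (Y i). xi (Elem c) = eps" using Z base unfolding ZZE_def by auto
  have mc: "max_chain P (C i)" "xiplus xi (C i) = d - eps" using A(1) unfolding Cxi_def by auto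
  show ?case using qd_tight[OF fin mc(1) A(2-5)] mc(2) qseq_base[of P eps X Y i] by simp
next
  case (step n)
  have n: "Suc n \<le> t" "n \<le> t" using step by auto
  have A: "C (Suc n) \<in> Cxi P xi (d - eps)" "memE (C (Suc n)) (X (Suc n))" "memE (C (Suc n)) (Y (Suc n))"
     "lessE (X (Suc n)) (Y (Suc n))" "\<forall>c\<in>btw (C (Suc n)) (X (Suc n)) (Y (Suc n)). xi (Elem c) = eps"
    using Z n unfolding ZZE_def by auto
  have An: "C n \<in> Cxi P xi (d - eps)" "memE (C n) (Y n)" using Z n unfolding ZZE_def by auto
  have adj: "lessE (X (Suc n)) (Y n)" using Z step unfolding ZZE_def by auto
  have mc: "max_chain P (C (Suc n))" "xiplus xi (C (Suc n)) = d - eps" using A(1) unfolding Cxi_def by auto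
  have mcn: "max_chain P (C n)" using An(1) unfolding Cxi_def by auto
  have t1: "d - eps \<le> xiplus xi (lowp (C (Suc n)) (X (Suc n))) + qdist P eps (X (Suc n)) (Y (Suc n)) - eps + xiplus xi (highp (C (Suc n)) (Y (Suc n)))"
    using qd_tight[OF fin mc(1) A(2-5)] mc(2) by simp
  obtain C' where C': "max_chain P C'"
     "xiplus xi C' = xiplus xi (lowp (C (Suc n)) (X (Suc n))) + xiplus xi (btw C' (X (Suc n)) (Y n)) + xiplus xi (highp (C n) (Y n))"
     "eps * int (card (btw C' (X (Suc n)) (Y n))) \<le> xiplus xi (btw C' (X (Suc n)) (Y n))"
     "qdist P eps (X (Suc n)) (Y n) = eps * (int (card (btw C' (X (Suc n)) (Y n))) + 1)"
    using splice_q[OF fin Sm_lb[OF S] mc(1) mcn A(2) An(2) adj] by blast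
  have "xiplus xi C' \<le> d - eps" using Sm_chain[OF S C'(1)] d by simp
  hence t2: "xiplus xi (lowp (C (Suc n)) (X (Suc n))) + qdist P eps (X (Suc n)) (Y n) - eps + xiplus xi (highp (C n) (Y n)) \<le> d - eps"
    using C'(2-4) by (simp add: algebra_simps)
  show ?case using step.IH[OF n(2)] t1 t2 qseq_Suc[OF step.hyps(1), of P eps X Y] by linarith
qed



lemma shortQ_ZZ:
  assumes fin: "finite P" and S: "Sm P eps xi" and d: "d = xi NInf"
    and Z: "ZZ P xi eps d t y x C" and nq: "\<not> qreduced P eps t y x"
  shows "\<exists>t' y' x' C'. t' < t \<and> ZZ P xi eps d t' y' x' C'"
proof -
  define X where "X = lowE x"
  define Y where "Y = highE y t"
  obtain i j where ij: "i < j" "j \<le> t" and v: "lessE (X i) (Y j)"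
    and q: "qseq P eps X Y i j \<le> qdist P eps (X i) (Y j)"
    using nq unfolding qreduced_def X_def Y_def by (auto simp: not_less)
  have ZE: "ZZE P xi eps d t X Y C" using ZZ_ZZE[OF Z] unfolding X_def Y_def .
  have Ai: "C i \<in> Cxi P xi (d - eps)" "memE (C i) (X i)" using ZE ij unfolding ZZE_def by auto
  have Aj: "C j \<in> Cxi P xi (d - eps)" "memE (C j) (Y j)" using ZE ij unfolding ZZE_def by auto
  have mci: "max_chain P (C i)" using Ai(1) unfolding Cxi_def by auto
  have mcj: "max_chain P (C j)" using Aj(1) unfolding Cxi_def by auto
  obtain Cs where Cs: "max_chain P Cs" "memE Cs (X i)" "memE Cs (Y j)"
     "xiplus xi Cs = xiplus xi (lowp (C i) (X i)) + xiplus xi (btw Cs (X i) (Y j)) + xiplus xi (highp (C j) (Y j))"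
     "eps * int (card (btw Cs (X i) (Y j))) \<le> xiplus xi (btw Cs (X i) (Y j))"
     "qdist P eps (X i) (Y j) = eps * (int (card (btw Cs (X i) (Y j))) + 1)"
     "\<forall>c\<in>btw Cs (X i) (Y j). xi (Elem c) \<ge> eps"
    using splice_q[OF fin Sm_lb[OF S] mci mcj Ai(2) Aj(2) v] by blast
  have te: "d - eps \<le> xiplus xi (lowp (C i) (X i)) + qseq P eps X Y i j - eps + xiplus xi (highp (C j) (Y j))"
    using tele[OF fin S d ZE _ ij(2)] ij by simp
  have up: "xiplus xi Cs \<le> d - eps" using Sm_chain[OF S Cs(1)] d by simp
  let ?B = "btw Cs (X i) (Y j)"
  have tight: "xiplus xi Cs = d - eps" using te up q Cs(4-6) by (simp add: algebra_simps)
  have eqs: "xiplus xi ?B = eps * int (card ?B)" using te up q Cs(4-6) by (simp add: algebra_simps)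
  have fB: "finite ?B" using fin_sub[OF fin Cs(1), of ?B] unfolding btw_def by auto
  have "(\<Sum>c\<in>?B. xi (Elem c) - eps) = 0" using eqs unfolding xiplus_def by (simp add: sum_subtractf)
  hence allE: "\<forall>c\<in>?B. xi (Elem c) = eps"
    using sum_nonneg_eq_0_iff[OF fB, of "\<lambda>c. xi (Elem c) - eps"] Cs(7) by auto
  have CsX: "Cs \<in> Cxi P xi (d - eps)" using Cs(1) tight unfolding Cxi_def by auto
  define fx where "fx = (\<lambda>l::nat. if l \<le> i then l else l + (j - i))"
  define fy where "fy = (\<lambda>l::nat. if l < i then l else l + (j - i))"
  define C' where "C' = (\<lambda>l. if l < i then C l else if l = i then Cs else C (l + (j - i)))"
  define t' where "t' = t - (j - i)"
  have Z': "ZZE P xi eps d t' (X \<circ> fx) (Y \<circ> fy) C'"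
    using shortQ[OF ZE ij CsX Cs(2,3) v allE] unfolding fx_def fy_def C'_def t'_def by simp
  have e1: "X \<circ> fx = lowE (x \<circ> fx)" unfolding X_def by (rule ext) (simp add: lowE_comp fx_def)
  have e2: "Y \<circ> fy = highE (y \<circ> fy) t'" unfolding Y_def
    by (rule ext, simp, rule highE_comp[symmetric]) (use ij in \<open>auto simp: fy_def t'_def\<close>)
  have "ZZ P xi eps d t' (y \<circ> fy) (x \<circ> fx) C'" using ZZE_ZZ Z' e1 e2 by metis
  moreover have "t' < t" unfolding t'_def using ij by arith
  ultimately show ?thesis by blast
qed

lemma reduce:
  assumes fin: "finite P" and S: "Sm P eps xi" and d: "d = xi NInf"
  shows "ZZ P xi eps d t y x C \<Longrightarrow> \<exists>t' y' x' C'. ZZ P xi eps d t' y' x' C' \<and> condN' P t' y' x' \<and> qreduced P eps t' y' x'"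
proof (induction t arbitrary: y x C rule: less_induct)
  case (less t)
  show ?case
  proof (cases "condN' P t y x")
    case False
    have c12: "(\<forall>i<t. y i \<in> P \<and> x (Suc i) \<in> P \<and> x (Suc i) < y i) \<and> (\<forall>i. 1 \<le> i \<and> i < t \<longrightarrow> x i < y i)"
      using less.prems unfolding ZZ_def by blast
    then obtain i j where ij: "i < t" "1 \<le> j" "j \<le> t" "i + 2 \<le> j" "x j < y i"
      using False unfolding condN'_def by blast
    obtain t' y' x' C' where "t' < t" "ZZ P xi eps d t' y' x' C'"
      using shortN_ZZ[OF less.prems ij(1,4,3,5)] by blast
    thus ?thesis using less.IH by blast
  next
    case True
    show ?thesis
    proof (cases "qreduced P eps t y x")
      case True thus ?thesis using \<open>condN' P t y x\<close> less.prems by blast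
    next
      case False
      obtain t' y' x' C' where "t' < t" "ZZ P xi eps d t' y' x' C'"
        using shortQ_ZZ[OF fin S d less.prems False] by blast
      thus ?thesis using less.IH by blast
    qed
  qed
qed



theorem mainTheorem8:
  fixes P :: "('a::order) set" and eps :: int and xi :: "'a ext \<Rightarrow> int" and d :: int
  assumes "finite P"
    and "eps = 1 \<or> eps = -1"
    and "Sm P eps xi"
    and "d = xi NInf"
  shows "(is_generator P eps xi \<longleftrightarrow>
     (\<exists>s z w C. (\<forall>i<s. z i \<in> P \<and> w (Suc i) \<in> P \<and> w (Suc i) < z i) \<and>
        (\<forall>i. 1 \<le> i \<and> i < s \<longrightarrow> w i < z i) \<and>
        (\<forall>i\<le>s. C i \<in> Cxi P xi (d - eps)) \<and>
        (s = 0 \<or> (z 0 \<in> C 0 \<and> w s \<in> C s \<and>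
                   (\<forall>i. 1 \<le> i \<and> i < s \<longrightarrow> w i \<in> C i \<and> z i \<in> C i))) \<and>
        (\<forall>i\<le>s. \<forall>c\<in>C i. lessE (lowE w i) (Elem c) \<and> lessE (Elem c) (highE z s i)
              \<longrightarrow> xi (Elem c) = eps)))
   \<and> (is_generator P eps xi \<longleftrightarrow>
     (\<exists>t y x C. condN' P t y x \<and> qreduced P eps t y x \<and>
        (\<forall>i\<le>t. C i \<in> Cxi P xi (d - eps)) \<and>
        (t = 0 \<or> (y 0 \<in> C 0 \<and> x t \<in> C t \<and>
                   (\<forall>i. 1 \<le> i \<and> i < t \<longrightarrow> x i \<in> C i \<and> y i \<in> C i))) \<and>
        (\<forall>i\<le>t. \<forall>c\<in>C i. lessE (lowE x i) (Elem c) \<and> lessE (Elem c) (highE y t i)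
              \<longrightarrow> xi (Elem c) = eps)))"
proof -
  note fin = assms(1) and S = assms(3) and d = assms(4)
  have eq1: "is_generator P eps xi \<longleftrightarrow> (\<exists>s z w C. ZZ P xi eps d s z w C)"
  proof
    assume g: "is_generator P eps xi"
    show "\<exists>s z w C. ZZ P xi eps d s z w C"
      using generator_zz[OF fin S d] g by blast
  next
    assume "\<exists>s z w C. ZZ P xi eps d s z w C"
    then obtain s z w C where "ZZ P xi eps d s z w C" by blast
    thus "is_generator P eps xi" using zz_generator[OF fin S] d by simp
  qed
  have eq2: "(\<exists>s z w C. ZZ P xi eps d s z w C) \<longleftrightarrow>
     (\<exists>t y x C. condN' P t y x \<and> qreduced P eps t y x \<and>
        (\<forall>i\<le>t. C i \<in> Cxi P xi (d - eps)) \<and>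
        (t = 0 \<or> (y 0 \<in> C 0 \<and> x t \<in> C t \<and>
                   (\<forall>i. 1 \<le> i \<and> i < t \<longrightarrow> x i \<in> C i \<and> y i \<in> C i))) \<and>
        (\<forall>i\<le>t. \<forall>c\<in>C i. lessE (lowE x i) (Elem c) \<and> lessE (Elem c) (highE y t i)
              \<longrightarrow> xi (Elem c) = eps))"
  proof
    assume "\<exists>s z w C. ZZ P xi eps d s z w C"
    then obtain s z w C where "ZZ P xi eps d s z w C" by blast
    then obtain t y x C' where "ZZ P xi eps d t y x C'" "condN' P t y x" "qreduced P eps t y x"
      using reduce[OF fin S d] by blast
    thus "\<exists>t y x C. condN' P t y x \<and> qreduced P eps t y x \<and>
        (\<forall>i\<le>t. C i \<in> Cxi P xi (d - eps)) \<and>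
        (t = 0 \<or> (y 0 \<in> C 0 \<and> x t \<in> C t \<and>
                   (\<forall>i. 1 \<le> i \<and> i < t \<longrightarrow> x i \<in> C i \<and> y i \<in> C i))) \<and>
        (\<forall>i\<le>t. \<forall>c\<in>C i. lessE (lowE x i) (Elem c) \<and> lessE (Elem c) (highE y t i)
              \<longrightarrow> xi (Elem c) = eps)"
      unfolding ZZ_def by (intro exI[of _ t] exI[of _ y] exI[of _ x] exI[of _ C']) auto
  next
    assume "\<exists>t y x C. condN' P t y x \<and> qreduced P eps t y x \<and>
        (\<forall>i\<le>t. C i \<in> Cxi P xi (d - eps)) \<and>
        (t = 0 \<or> (y 0 \<in> C 0 \<and> x t \<in> C t \<and>
                   (\<forall>i. 1 \<le> i \<and> i < t \<longrightarrow> x i \<in> C i \<and> y i \<in> C i))) \<and>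
        (\<forall>i\<le>t. \<forall>c\<in>C i. lessE (lowE x i) (Elem c) \<and> lessE (Elem c) (highE y t i)
              \<longrightarrow> xi (Elem c) = eps)"
    thus "\<exists>s z w C. ZZ P xi eps d s z w C"
    proof (elim exE)
      fix t y x C assume h: "condN' P t y x \<and> qreduced P eps t y x \<and>
        (\<forall>i\<le>t. C i \<in> Cxi P xi (d - eps)) \<and>
        (t = 0 \<or> (y 0 \<in> C 0 \<and> x t \<in> C t \<and>
                   (\<forall>i. 1 \<le> i \<and> i < t \<longrightarrow> x i \<in> C i \<and> y i \<in> C i))) \<and>
        (\<forall>i\<le>t. \<forall>c\<in>C i. lessE (lowE x i) (Elem c) \<and> lessE (Elem c) (highE y t i)
              \<longrightarrow> xi (Elem c) = eps)"
      have "ZZ P xi eps d t y x C" unfolding ZZ_def using h unfolding condN'_def by auto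
      thus ?thesis by blast
    qed
  qed
  have c1: "is_generator P eps xi \<longleftrightarrow>
     (\<exists>s z w C. (\<forall>i<s. z i \<in> P \<and> w (Suc i) \<in> P \<and> w (Suc i) < z i) \<and>
        (\<forall>i. 1 \<le> i \<and> i < s \<longrightarrow> w i < z i) \<and>
        (\<forall>i\<le>s. C i \<in> Cxi P xi (d - eps)) \<and>
        (s = 0 \<or> (z 0 \<in> C 0 \<and> w s \<in> C s \<and>
                   (\<forall>i. 1 \<le> i \<and> i < s \<longrightarrow> w i \<in> C i \<and> z i \<in> C i))) \<and>
        (\<forall>i\<le>s. \<forall>c\<in>C i. lessE (lowE w i) (Elem c) \<and> lessE (Elem c) (highE z s i)
              \<longrightarrow> xi (Elem c) = eps))"
    using eq1 unfolding ZZ_def .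
  show ?thesis using c1 trans[OF eq1 eq2] by (rule conjI)
qed


end
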